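(* Let $\Sigma$ be a compact connected oriented surface with nonempty boundary, $\phi:\pi_1(\Sigma)\to\mathrm{SO}_0(n,2)$, and let $\mathbf J$ be a smooth $\phi$-equivariant map $\tilde\Sigma\to\mathcal J(\mathbb R^{n+2},\Omega)$ which, on a collar $\partial\Sigma\times[0,1]$, does not depend on the collar coordinate. Then the eta invariant of the boundary operator $A_{i\mathbf J}=i\mathbf J\frac{d}{dx}$, acting on sections of $\mathcal E|_{\partial\Sigma}$, vanishes: $\eta(A_{i\mathbf J})=0$.
   Context: $\Omega$ is the quadratic form $x_1^2+\dots+x_n^2-x_{n+1}^2-x_{n+2}^2$ on $\mathbb R^{n+2}$ (matrix $I_{n,2}=\mathrm{diag}(I_n,-I_2)$), extended complex-bilinearly to $\mathbb C^{n+2}$; $\mathrm{SO}_0(n,2)$ is the identity component of its orthogonal group. $\mathcal J(\mathbb R^{n+2},\Omega)=\{J\in\mathrm{SO}_0(n,2):J^2=\mathrm{Id},\ \Omega(\cdot,J\bar\cdot)\text{ positive definite}\}$ (the conjugates of $I_{n,2}$), a model of the symmetric space of $\mathrm{SO}_0(n,2)$. $\mathcal E=\tilde\Sigma\times_\phi\mathbb C^{n+2}$; $x$ is an arclength coordinate on $\partial\Sigma$ for a metric that is a product near the boundary, oriented as the boundary of $\Sigma$. $A_{i\mathbf J}$ is self-adjoint for $\int_{\partial\Sigma}\Omega(s_1,\mathbf J\bar s_2)dx$, and the eta invariant is the value at $s=0$ of the meromorphic continuation of $\sum_{\lambda\ne0}\mathrm{sgn}(\lambda)|\lambda|^{-s}$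 over its eigenvalues. *)

theory Defs
  imports "HOL-Complex_Analysis.Complex_Analysis"
begin

text \<open>Real and complex (n+2)-vectors/matrices are represented by functions on indices,
  with all entries outside the range {0..<N} (N = n+2) equal to zero.\<close>

type_synonym rmat = "nat \<Rightarrow> nat \<Rightarrow> real"
type_synonym cvec = "nat \<Rightarrow> complex"

definition supported_mat :: "nat \<Rightarrow> rmat \<Rightarrow> bool" where
  "supported_mat N A \<longleftrightarrow> (\<forall>i j. (N \<le> i \<or> N \<le> j) \<longrightarrow> A i j = 0)"

definition mmul :: "nat \<Rightarrow> rmat \<Rightarrow> rmat \<Rightarrow> rmat" where
  "mmul N A B = (\<lambda>i j. if i < N \<and> j < N then (\<Sum>k<N. A i k * B k j) else 0)"

definition idm :: "nat \<Rightarrow> rmat" where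
  "idm N = (\<lambda>i j. if i < N \<and> j < N \<and> i = j then 1 else 0)"

definition mtrans :: "rmat \<Rightarrow> rmat" where
  "mtrans A = (\<lambda>i j. A j i)"

definition Imat :: "nat \<Rightarrow> rmat" where
  "Imat n = (\<lambda>i j. if i = j \<and> i < n then 1 else if i = j \<and> n \<le> i \<and> i < n + 2 then -1 else 0)"

text \<open>Omega, extended complex-bilinearly to C^{n+2}.\<close>
definition Omega :: "nat \<Rightarrow> cvec \<Rightarrow> cvec \<Rightarrow> complex" where
  "Omega n v w = (\<Sum>i<n+2. complex_of_real (Imat n i i) * v i * w i)"

definition cmatvec :: "nat \<Rightarrow> rmat \<Rightarrow> cvec \<Rightarrow> cvec" where
  "cmatvec N A v = (\<lambda>i. if i < N then (\<Sum>j<N. complex_of_real (A i j) * v j) else 0)"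

definition O_n2 :: "nat \<Rightarrow> rmat set" where
  "O_n2 n = {A. supported_mat (n+2) A \<and> mmul (n+2) (mtrans A) (mmul (n+2) (Imat n) A) = Imat n}"

text \<open>SO_0(n,2): the identity component of O(n,2) (a Lie group, so the path component
  of the identity).\<close>
definition SO0_n2 :: "nat \<Rightarrow> rmat set" where
  "SO0_n2 n = {A. \<exists>\<gamma> :: real \<Rightarrow> rmat.
      (\<forall>i j. continuous_on {0..1} (\<lambda>t. \<gamma> t i j)) \<and>
      (\<forall>t\<in>{0..1}. \<gamma> t \<in> O_n2 n) \<and> \<gamma> 0 = idm (n+2) \<and> \<gamma> 1 = A}"

definition Jspace :: "nat \<Rightarrow> rmat set" where
  "Jspace n = {J. J \<in> SO0_n2 n \<and> mmul (n+2) J J = idm (n+2) \<and>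
      (\<forall>v :: cvec. (\<forall>i\<ge>n+2. v i = 0) \<and> (\<exists>i<n+2. v i \<noteq> 0) \<longrightarrow>
         Im (Omega n v (cmatvec (n+2) J (\<lambda>i. cnj (v i)))) = 0 \<and>
         Re (Omega n v (cmatvec (n+2) J (\<lambda>i. cnj (v i)))) > 0)}"

definition smooth_fun :: "(real \<Rightarrow> 'a::real_normed_vector) \<Rightarrow> bool" where
  "smooth_fun f \<longleftrightarrow> (\<exists>D :: nat \<Rightarrow> real \<Rightarrow> 'a. D 0 = f \<and>
      (\<forall>k x. (D k has_vector_derivative D (Suc k) x) (at x)))"

text \<open>Boundary data: c boundary circles, the k-th of length L k, with holonomy g k,
  and the restriction Jb k of the equivariant map J to a lift R of the k-th boundary circle
  (arclength coordinate x), satisfying Jb k (x + L k) = g k * Jb k x * (g k)^-1.\<close>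
definition boundary_data ::
  "nat \<Rightarrow> nat \<Rightarrow> (nat \<Rightarrow> real) \<Rightarrow> (nat \<Rightarrow> rmat) \<Rightarrow> (nat \<Rightarrow> real \<Rightarrow> rmat) \<Rightarrow> bool" where
  "boundary_data n c L g Jb \<longleftrightarrow>
     (\<forall>k<c. L k > 0 \<and> g k \<in> SO0_n2 n \<and>
        (\<forall>i j. smooth_fun (\<lambda>x. Jb k x i j)) \<and>
        (\<forall>x. Jb k x \<in> Jspace n) \<and>
        (\<forall>x. mmul (n+2) (Jb k (x + L k)) (g k) = mmul (n+2) (g k) (Jb k x)))"

text \<open>(Smooth) sections of E restricted to the boundary: on the k-th circle, a smooth
  map s k : R \<rightarrow> C^{n+2} with s k (x + L k) = g k (s k x).\<close>
definition bsection ::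
  "nat \<Rightarrow> nat \<Rightarrow> (nat \<Rightarrow> real) \<Rightarrow> (nat \<Rightarrow> rmat) \<Rightarrow> (nat \<Rightarrow> real \<Rightarrow> cvec) \<Rightarrow> bool" where
  "bsection n c L g s \<longleftrightarrow>
     (\<forall>k x i. (c \<le> k \<or> n + 2 \<le> i) \<longrightarrow> s k x i = 0) \<and>
     (\<forall>k<c. (\<forall>i. smooth_fun (\<lambda>x. s k x i)) \<and>
        (\<forall>x. s k (x + L k) = cmatvec (n+2) (g k) (s k x)))"

definition eigensection ::
  "nat \<Rightarrow> nat \<Rightarrow> (nat \<Rightarrow> real) \<Rightarrow> (nat \<Rightarrow> rmat) \<Rightarrow> (nat \<Rightarrow> real \<Rightarrow> rmat) \<Rightarrow> real
     \<Rightarrow> (nat \<Rightarrow> real \<Rightarrow> cvec) \<Rightarrow> bool" where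
  "eigensection n c L g Jb lam s \<longleftrightarrow> bsection n c L g s \<and>
     (\<forall>k<c. \<forall>x. \<forall>i<n+2.
        \<i> * (\<Sum>j<n+2. complex_of_real (Jb k x i j) * vector_derivative (\<lambda>t. s k t j) (at x))
        = complex_of_real lam * s k x i)"

definition lin_indep_sections :: "nat \<Rightarrow> (nat \<Rightarrow> nat \<Rightarrow> real \<Rightarrow> cvec) \<Rightarrow> bool" where
  "lin_indep_sections m S \<longleftrightarrow>
     (\<forall>a :: nat \<Rightarrow> complex. (\<forall>k x i. (\<Sum>j<m. a j * S j k x i) = 0) \<longrightarrow> (\<forall>j<m. a j = 0))"

definition eig_mult ::
  "nat \<Rightarrow> nat \<Rightarrow> (nat \<Rightarrow> real) \<Rightarrow> (nat \<Rightarrow> rmat) \<Rightarrow> (nat \<Rightarrow> real \<Rightarrow> rmat) \<Rightarrow> real \<Rightarrow> nat" where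
  "eig_mult n c L g Jb lam =
     Sup {m. \<exists>S. (\<forall>j<m. eigensection n c L g Jb lam (S j)) \<and> lin_indep_sections m S}"

text \<open>The eta invariant vanishes: the series sum over nonzero eigenvalues (with multiplicity)
  of sgn(lam) |lam|^-s converges for Re s large, and its meromorphic continuation to a
  connected open set containing 0 is regular at 0 with value 0.\<close>
definition eta_vanishes ::
  "nat \<Rightarrow> nat \<Rightarrow> (nat \<Rightarrow> real) \<Rightarrow> (nat \<Rightarrow> rmat) \<Rightarrow> (nat \<Rightarrow> real \<Rightarrow> rmat) \<Rightarrow> bool" where
  "eta_vanishes n c L g Jb \<longleftrightarrow>
     (let mu = eig_mult n c L g Jb;
          Spec = {lam. lam \<noteq> 0 \<and> mu lam > 0};
          term = (\<lambda>s lam. of_nat (mu lam) * complex_of_real (sgn lam)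
                    * exp (- s * complex_of_real (ln \<bar>lam\<bar>)))
      in \<exists>\<sigma> U f. open U \<and> connected U \<and> 0 \<in> U \<and> {s. Re s > \<sigma>} \<subseteq> U \<and>
           f meromorphic_on U \<and>
           (\<forall>s. Re s > \<sigma> \<longrightarrow> (term s has_sum f s) Spec) \<and>
           (f \<longlongrightarrow> 0) (at 0))"

end

theory Submission
  imports Defs
begin

declare sum.lessThan_Suc[simp del] add_2_eq_Suc[simp del] add_2_eq_Suc'[simp del]

abbreviation Om where "Om n \<equiv> Omega n"

lemma Imat_offdiag: "Imat n k l = (if l = k then Imat n k k else 0)"
  by (simp add: Imat_def)

lemma Imat_sq: "i < n+2 \<Longrightarrow> Imat n i i * Imat n i i = 1"
  by (simp add: Imat_def)

lemma Imat_diag_cases: "Imat n i i = 1 \<or> Imat n i i = -1 \<or> (Imat n i i = 0 \<and> n+2 \<le> i)"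
  by (auto simp: Imat_def)

lemma sum_Imat_row: "k < N \<Longrightarrow> (\<Sum>l<N. Imat n k l * f l) = Imat n k k * f k"
proof -
  assume k: "k < N"
  have "(\<Sum>l<N. Imat n k l * f l) = (\<Sum>l<N. if l = k then Imat n k k * f l else 0)"
    by (rule sum.cong) (auto simp: Imat_def)
  also have "\<dots> = Imat n k k * f k" using k by (simp add: sum.delta)
  finally show ?thesis .
qed

lemma sum_Imat_col: "k < N \<Longrightarrow> (\<Sum>l<N. f l * Imat n l k) = f k * Imat n k k"
proof -
  assume k: "k < N"
  have "(\<Sum>l<N. f l * Imat n l k) = (\<Sum>l<N. if l = k then f l * Imat n k k else 0)"
    by (rule sum.cong) (auto simp: Imat_def)
  also have "\<dots> = f k * Imat n k k" using k by (simp add: sum.delta)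
  finally show ?thesis .
qed

lemma sum_Imat_row_c: "k < N \<Longrightarrow> (\<Sum>l<N. of_real (Imat n k l) * (f l :: 'a::real_algebra_1)) = of_real (Imat n k k) * f k"
proof -
  assume k: "k < N"
  have "(\<Sum>l<N. of_real (Imat n k l) * f l) = (\<Sum>l<N. if l = k then of_real (Imat n k k) * (f l :: 'a) else 0)"
    by (rule sum.cong) (auto simp: Imat_def)
  also have "\<dots> = of_real (Imat n k k) * f k" using k by (simp add: sum.delta)
  finally show ?thesis .
qed

lemma O_entry:
  assumes A: "A \<in> O_n2 n" and i: "i < n+2" and j: "j < n+2"
  shows "(\<Sum>k<n+2. Imat n k k * A k i * A k j) = Imat n i j"
proof -
  from A have "mmul (n+2) (mtrans A) (mmul (n+2) (Imat n) A) i j = Imat n i j"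
    by (simp add: O_n2_def)
  hence "(\<Sum>k<n+2. A k i * (\<Sum>l<n+2. Imat n k l * A l j)) = Imat n i j"
    using i j by (simp add: mmul_def mtrans_def)
  moreover have "(\<Sum>k<n+2. A k i * (\<Sum>l<n+2. Imat n k l * A l j)) = (\<Sum>k<n+2. Imat n k k * A k i * A k j)"
    by (rule sum.cong) (simp_all add: sum_Imat_row)
  ultimately show ?thesis by simp
qed

lemma Omega_O:
  assumes A: "A \<in> O_n2 n"
  shows "Omega n (cmatvec (n+2) A v) (cmatvec (n+2) A w) = Omega n v w"
proof -
  let ?N = "n+2"
  have "Omega n (cmatvec ?N A v) (cmatvec ?N A w) =
      (\<Sum>k<?N. of_real (Imat n k k) * ((\<Sum>i<?N. of_real (A k i) * v i) * (\<Sum>j<?N. of_real (A k j) * w j)))"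
    unfolding Omega_def cmatvec_def by (simp add: mult.assoc)
  also have "\<dots> = (\<Sum>k<?N. \<Sum>i<?N. \<Sum>j<?N. of_real (Imat n k k * A k i * A k j) * (v i * w j))"
    by (simp only: sum_product, simp add: sum_distrib_left mult_ac)
  also have "\<dots> = (\<Sum>i<?N. \<Sum>j<?N. \<Sum>k<?N. of_real (Imat n k k * A k i * A k j) * (v i * w j))"
    by (subst sum.swap, rule sum.cong, simp, subst sum.swap, simp)
  also have "\<dots> = (\<Sum>i<?N. \<Sum>j<?N. of_real (Imat n i j) * (v i * w j))"
  proof (rule sum.cong[OF refl], rule sum.cong[OF refl])
    fix i j assume "i \<in> {..<?N}" "j \<in> {..<?N}"
    hence ij: "i < ?N" "j < ?N" by auto
    have "(\<Sum>k<?N. of_real (Imat n k k * A k i * A k j) * (v i * w j))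
        = of_real (\<Sum>k<?N. Imat n k k * A k i * A k j) * (v i * w j)"
      by (simp only: of_real_sum sum_distrib_right)
    also have "\<dots> = of_real (Imat n i j) * (v i * w j)" using O_entry[OF A ij] by simp
    finally show "(\<Sum>k<?N. of_real (Imat n k k * A k i * A k j) * (v i * w j)) = of_real (Imat n i j) * (v i * w j)" .
  qed
  also have "\<dots> = (\<Sum>i<?N. of_real (Imat n i i) * (v i * w i))"
    by (rule sum.cong[OF refl]) (simp add: sum_Imat_row_c)
  also have "\<dots> = Omega n v w" unfolding Omega_def by (simp add: mult.assoc)
  finally show ?thesis .
qed

lemma Omega_cong: "(\<And>i. i < n+2 \<Longrightarrow> v i = v' i) \<Longrightarrow> (\<And>i. i < n+2 \<Longrightarrow> w i = w' i) \<Longrightarrow> Omega n v w = Omega n v' w'"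
  unfolding Omega_def by (rule sum.cong) auto

lemma cmatvec_cong: "(\<And>i. i < N \<Longrightarrow> v i = v' i) \<Longrightarrow> cmatvec N A v = cmatvec N A v'"
  unfolding cmatvec_def by (rule ext) (auto intro!: sum.cong)

lemma Omega_sym: "Omega n v w = Omega n w v"
  unfolding Omega_def by (simp add: mult_ac)

lemma cmatvec_out: "\<not> i < N \<Longrightarrow> cmatvec N A v i = 0"
  by (simp add: cmatvec_def)

lemma cmatvec_in: "i < N \<Longrightarrow> cmatvec N A v i = (\<Sum>j<N. complex_of_real (A i j) * v j)"
  by (simp add: cmatvec_def)

lemma cnj_Omega: "cnj (Omega n v w) = Omega n (\<lambda>i. cnj (v i)) (\<lambda>i. cnj (w i))"
  unfolding Omega_def by simp

lemma cnj_cmatvec: "(\<lambda>i. cnj (cmatvec N A v i)) = cmatvec N A (\<lambda>i. cnj (v i))"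
  unfolding cmatvec_def by (rule ext) simp

lemma Omega_sum_left: "Omega n (\<lambda>i. \<Sum>p\<in>P. f p i) w = (\<Sum>p\<in>P. Omega n (f p) w)"
  unfolding Omega_def by (subst sum.swap) (simp add: sum_distrib_left sum_distrib_right)

lemma Omega_sum_right: "Omega n w (\<lambda>i. \<Sum>p\<in>P. f p i) = (\<Sum>p\<in>P. Omega n w (f p))"
  using Omega_sum_left[of n f P w] by (simp add: Omega_sym)

lemma Omega_scale_left: "Omega n (\<lambda>i. a * v i) w = a * Omega n v w"
  unfolding Omega_def by (simp add: sum_distrib_left mult_ac)

lemma Omega_scale_right: "Omega n w (\<lambda>i. a * v i) = a * Omega n w v"
  unfolding Omega_def by (simp add: sum_distrib_left mult_ac)

lemma Omega_add_left: "Omega n (\<lambda>i. v i + v' i) w = Omega n v w + Omega n v' w"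
  unfolding Omega_def by (simp add: sum.distrib algebra_simps)

lemma Omega_add_right: "Omega n w (\<lambda>i. v i + v' i) = Omega n w v + Omega n w v'"
  unfolding Omega_def by (simp add: sum.distrib algebra_simps)

lemma Omega_diff_left: "Omega n (\<lambda>i. v i - v' i) w = Omega n v w - Omega n v' w"
  unfolding Omega_def by (simp add: sum_subtractf algebra_simps)

lemma Omega_diff_right: "Omega n w (\<lambda>i. v i - v' i) = Omega n w v - Omega n w v'"
  unfolding Omega_def by (simp add: sum_subtractf algebra_simps)

lemma cmatvec_sum: "cmatvec N A (\<lambda>i. \<Sum>p\<in>P. f p i) = (\<lambda>i. \<Sum>p\<in>P. cmatvec N A (f p) i)"
  unfolding cmatvec_def by (rule ext) (auto simp: sum_distrib_left intro: sum.swap)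

lemma cmatvec_scale: "cmatvec N A (\<lambda>i. a * v i) = (\<lambda>i. a * cmatvec N A v i)"
  unfolding cmatvec_def by (rule ext) (auto simp: sum_distrib_left mult_ac)

lemma cmatvec_add: "cmatvec N A (\<lambda>i. v i + w i) = (\<lambda>i. cmatvec N A v i + cmatvec N A w i)"
  unfolding cmatvec_def by (rule ext) (auto simp: sum.distrib algebra_simps)

lemma cmatvec_diff: "cmatvec N A (\<lambda>i. v i - w i) = (\<lambda>i. cmatvec N A v i - cmatvec N A w i)"
  unfolding cmatvec_def by (rule ext) (auto simp: sum_subtractf algebra_simps)

lemma Jspace_O: "J \<in> Jspace n \<Longrightarrow> J \<in> O_n2 n"
  unfolding Jspace_def SO0_n2_def by force

lemma SO0_O: "A \<in> SO0_n2 n \<Longrightarrow> A \<in> O_n2 n"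
  unfolding SO0_n2_def by force

lemma Jspace_JJ:
  assumes J: "J \<in> Jspace n" and i: "i < n+2"
  shows "cmatvec (n+2) J (cmatvec (n+2) J v) i = v i"
proof -
  let ?N = "n+2"
  from J have JJ: "mmul ?N J J = idm ?N" by (simp add: Jspace_def)
  have e: "(\<Sum>k<?N. J i k * J k j) = (if j = i then 1 else 0)" if "j < ?N" for j
  proof -
    have "mmul ?N J J i j = idm ?N i j" using JJ by simp
    thus ?thesis using i that by (auto simp: mmul_def idm_def)
  qed
  have "cmatvec ?N J (cmatvec ?N J v) i = (\<Sum>k<?N. of_real (J i k) * (\<Sum>j<?N. of_real (J k j) * v j))"
    using i by (simp add: cmatvec_def)
  also have "\<dots> = (\<Sum>j<?N. \<Sum>k<?N. of_real (J i k * J k j) * v j)"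
    by (subst sum.swap) (simp add: sum_distrib_left mult_ac)
  also have "\<dots> = (\<Sum>j<?N. of_real (\<Sum>k<?N. J i k * J k j) * v j)"
    by (simp only: of_real_sum sum_distrib_right)
  also have "\<dots> = (\<Sum>j<?N. if j = i then v j else 0)"
    by (rule sum.cong[OF refl]) (simp add: e)
  also have "\<dots> = v i" using i by (simp add: sum.delta)
  finally show ?thesis .
qed

lemma Omega_J_sym:
  assumes J: "J \<in> Jspace n"
  shows "Omega n (cmatvec (n+2) J v) w = Omega n v (cmatvec (n+2) J w)"
proof -
  have "Omega n (cmatvec (n+2) J v) w = Omega n (cmatvec (n+2) J v) (cmatvec (n+2) J (cmatvec (n+2) J w))"
    by (rule Omega_cong) (simp_all add: Jspace_JJ[OF J])
  also have "\<dots> = Omega n v (cmatvec (n+2) J w)"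
    by (rule Omega_O[OF Jspace_O[OF J]])
  finally show ?thesis .
qed

definition Hf :: "nat \<Rightarrow> rmat \<Rightarrow> cvec \<Rightarrow> cvec \<Rightarrow> complex" where
  "Hf n J v w = Omega n v (cmatvec (n+2) J (\<lambda>i. cnj (w i)))"

lemma Hf_herm:
  assumes J: "J \<in> Jspace n"
  shows "cnj (Hf n J v w) = Hf n J w v"
proof -
  have "cnj (Hf n J v w) = Omega n (\<lambda>i. cnj (v i)) (cmatvec (n+2) J w)"
    unfolding Hf_def cnj_Omega cnj_cmatvec by simp
  also have "\<dots> = Omega n (cmatvec (n+2) J w) (\<lambda>i. cnj (v i))" by (rule Omega_sym)
  also have "\<dots> = Hf n J w v" unfolding Hf_def by (rule Omega_J_sym[OF J])
  finally show ?thesis .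
qed

lemma Hf_cong: "(\<And>i. i < n+2 \<Longrightarrow> v i = v' i) \<Longrightarrow> (\<And>i. i < n+2 \<Longrightarrow> w i = w' i) \<Longrightarrow> Hf n J v w = Hf n J v' w'"
proof -
  assume v: "\<And>i. i < n+2 \<Longrightarrow> v i = v' i" and w: "\<And>i. i < n+2 \<Longrightarrow> w i = w' i"
  have "cmatvec (n+2) J (\<lambda>i. cnj (w i)) = cmatvec (n+2) J (\<lambda>i. cnj (w' i))"
    by (rule cmatvec_cong) (simp add: w)
  then show ?thesis unfolding Hf_def by (intro Omega_cong) (simp_all add: v)
qed

lemma Hf_real: "J \<in> Jspace n \<Longrightarrow> Im (Hf n J v v) = 0"
  using Hf_herm[of J n v v] by (metis Reals_cnj_iff complex_is_Real_iff)

lemma Hf_pos_strict: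
  assumes J: "J \<in> Jspace n" and i: "i < n+2" "v i \<noteq> 0"
  shows "Re (Hf n J v v) > 0"
proof -
  define v' where "v' = (\<lambda>i. if i < n+2 then v i else 0)"
  have "Hf n J v v = Hf n J v' v'" by (rule Hf_cong) (simp_all add: v'_def)
  moreover have "Re (Hf n J v' v') > 0"
  proof -
    have "(\<forall>i\<ge>n+2. v' i = 0) \<and> (\<exists>i<n+2. v' i \<noteq> 0)" using i by (auto simp: v'_def)
    then show ?thesis using J unfolding Jspace_def Hf_def by blast
  qed
  ultimately show ?thesis by simp
qed

lemma Hf_zero:
  assumes "\<And>i. i < n+2 \<Longrightarrow> v i = 0"
  shows "Hf n J v w = 0"
  unfolding Hf_def Omega_def using assms by simp

lemma Hf_nonneg: "J \<in> Jspace n \<Longrightarrow> Re (Hf n J v v) \<ge> 0"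
  by (cases "\<exists>i<n+2. v i \<noteq> 0") (auto dest: Hf_pos_strict intro: less_imp_le simp: Hf_zero)

lemma Hf_zero_iff: "J \<in> Jspace n \<Longrightarrow> Re (Hf n J v v) = 0 \<Longrightarrow> i < n+2 \<Longrightarrow> v i = 0"
  using Hf_pos_strict by fastforce

lemma Hf_diff_left: "Hf n J (\<lambda>i. v i - w i) z = Hf n J v z - Hf n J w z"
  unfolding Hf_def by (rule Omega_diff_left)

lemma Hf_add_left: "Hf n J (\<lambda>i. v i + w i) z = Hf n J v z + Hf n J w z"
  unfolding Hf_def by (rule Omega_add_left)

lemma Hf_scale_left: "Hf n J (\<lambda>i. a * v i) z = a * Hf n J v z"
  unfolding Hf_def by (rule Omega_scale_left)

lemma Hf_sum_left: "Hf n J (\<lambda>i. \<Sum>p\<in>P. f p i) z = (\<Sum>p\<in>P. Hf n J (f p) z)"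
  unfolding Hf_def by (rule Omega_sum_left)

lemma Hf_diff_right: "Hf n J z (\<lambda>i. v i - w i) = Hf n J z v - Hf n J z w"
  unfolding Hf_def by (simp add: cmatvec_diff Omega_diff_right)

lemma Hf_add_right: "Hf n J z (\<lambda>i. v i + w i) = Hf n J z v + Hf n J z w"
  unfolding Hf_def by (simp add: cmatvec_add Omega_add_right)

lemma Hf_scale_right: "Hf n J z (\<lambda>i. a * v i) = cnj a * Hf n J z v"
  unfolding Hf_def by (simp add: cmatvec_scale Omega_scale_right)

lemma Hf_sum_right: "Hf n J z (\<lambda>i. \<Sum>p\<in>P. f p i) = (\<Sum>p\<in>P. Hf n J z (f p))"
  unfolding Hf_def by (simp add: cnj_sum cmatvec_sum Omega_sum_right)

lemma Hf_zero_right: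
  assumes "\<And>i. i < n+2 \<Longrightarrow> w i = 0"
  shows "Hf n J v w = 0"
proof -
  have "Hf n J v w = Hf n J v (\<lambda>i. 0)" by (rule Hf_cong) (simp_all add: assms)
  also have "\<dots> = 0" by (simp add: Hf_def Omega_def cmatvec_def)
  finally show ?thesis .
qed

lemma Hf_CS:
  assumes J: "J \<in> Jspace n"
  shows "(cmod (Hf n J v w))^2 \<le> Re (Hf n J v v) * Re (Hf n J w w)"
proof (cases "Re (Hf n J w w) = 0")
  case True
  then have "Hf n J v w = 0" by (intro Hf_zero_right) (rule Hf_zero_iff[OF J True])
  then show ?thesis using Hf_nonneg[OF J, of v] Hf_nonneg[OF J, of w] by simp
next
  case False
  define r where "r = Re (Hf n J w w)"
  have rpos: "r > 0" using False Hf_nonneg[OF J, of w] by (simp add: r_def)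
  have wr: "Hf n J w w = of_real r" using Hf_real[OF J, of w] by (simp add: r_def complex_eq_iff)
  define p where "p = Hf n J v w"
  have wv: "Hf n J w v = cnj p" unfolding p_def using Hf_herm[OF J, of v w] by simp
  define t where "t = p / of_real r"
  define u where "u = (\<lambda>i. v i - t * w i)"
  have "Hf n J u u = Hf n J v v - cnj t * p - t * cnj p + t * cnj t * of_real r"
    unfolding u_def Hf_diff_left Hf_diff_right Hf_scale_left Hf_scale_right wr wv p_def[symmetric]
    by (simp add: algebra_simps)
  also have "\<dots> = Hf n J v v - of_real ((cmod p)^2 / r)"
  proof -
    have pc: "p * cnj p = of_real ((cmod p)^2)" by (rule complex_norm_square[symmetric])
    have r0: "complex_of_real r \<noteq> 0" using rpos by simp
    have e1: "cnj t * p = of_real ((cmod p)^2 / r)"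
      unfolding t_def using r0 by (simp add: pc mult.commute[of "cnj p"])
    have e2: "t * cnj p = of_real ((cmod p)^2 / r)"
      unfolding t_def using r0 by (simp add: pc)
    have e3: "t * cnj t * of_real r = of_real ((cmod p)^2 / r)"
      unfolding t_def using r0 by (simp add: pc)
    show ?thesis unfolding e1 e2 e3 by simp
  qed
  finally have "Re (Hf n J u u) = Re (Hf n J v v) - (cmod p)^2 / r" by simp
  moreover have "Re (Hf n J u u) \<ge> 0" by (rule Hf_nonneg[OF J])
  ultimately have "(cmod p)^2 / r \<le> Re (Hf n J v v)" by simp
  then show ?thesis using rpos by (simp add: p_def r_def field_simps)
qed

lemma Hf_J_inv:
  assumes J: "J \<in> Jspace n"
  shows "Hf n J (cmatvec (n+2) J v) (cmatvec (n+2) J w) = Hf n J v w"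
proof -
  have "Hf n J (cmatvec (n+2) J v) (cmatvec (n+2) J w)
      = Omega n (cmatvec (n+2) J v) (cmatvec (n+2) J (cmatvec (n+2) J (\<lambda>i. cnj (w i))))"
    unfolding Hf_def by (simp add: cnj_cmatvec)
  also have "\<dots> = Hf n J v w" unfolding Hf_def by (rule Omega_O[OF Jspace_O[OF J]])
  finally show ?thesis .
qed

lemma Omega_as_Hf:
  assumes J: "J \<in> Jspace n"
  shows "Omega n f (\<lambda>i. cnj (s i)) = Hf n J f (cmatvec (n+2) J s)"
  unfolding Hf_def cnj_cmatvec by (rule Omega_cong) (simp_all add: Jspace_JJ[OF J])

definition msum :: "nat \<Rightarrow> rmat \<Rightarrow> real" where
  "msum N A = (\<Sum>i<N. \<Sum>j<N. \<bar>A i j\<bar>)"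

definition nsq :: "nat \<Rightarrow> cvec \<Rightarrow> real" where
  "nsq N v = (\<Sum>i<N. (cmod (v i))^2)"

lemma nsq_nonneg: "nsq N v \<ge> 0"
  unfolding nsq_def by (simp add: sum_nonneg)

lemma msum_nonneg: "msum N A \<ge> 0"
  unfolding msum_def by (simp add: sum_nonneg)

lemma cmod_le_nsq: "i < N \<Longrightarrow> (cmod (v i))^2 \<le> nsq N v"
  unfolding nsq_def by (rule member_le_sum) auto

lemma Omega_bound:
  "cmod (Omega n v (cmatvec (n+2) A w)) \<le> msum (n+2) A * ((nsq (n+2) v + nsq (n+2) w) / 2)"
proof -
  let ?N = "n+2"
  have d: "\<bar>Imat n i i\<bar> \<le> 1" for i by (simp add: Imat_def)
  have "Omega n v (cmatvec ?N A w) = (\<Sum>i<?N. \<Sum>j<?N. of_real (Imat n i i * A i j) * (v i * w j))"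
    unfolding Omega_def cmatvec_def by (auto simp: sum_distrib_left mult_ac intro!: sum.cong)
  hence "cmod (Omega n v (cmatvec ?N A w)) \<le> (\<Sum>i<?N. \<Sum>j<?N. cmod (of_real (Imat n i i * A i j) * (v i * w j)))"
    using order_trans[OF norm_sum sum_mono[OF norm_sum]] by simp
  also have "\<dots> \<le> (\<Sum>i<?N. \<Sum>j<?N. \<bar>A i j\<bar> * ((nsq ?N v + nsq ?N w) / 2))"
  proof (intro sum_mono)
    fix i j assume i: "i \<in> {..<?N}" and j: "j \<in> {..<?N}"
    have a: "cmod (v i) * cmod (w j) \<le> ((cmod (v i))^2 + (cmod (w j))^2) / 2"
    proof -
      have "0 \<le> (cmod (v i) - cmod (w j))^2" by simp
      then show ?thesis by (simp add: power2_diff)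
    qed
    have b: "((cmod (v i))^2 + (cmod (w j))^2) / 2 \<le> (nsq ?N v + nsq ?N w) / 2"
      using cmod_le_nsq[of i ?N v] cmod_le_nsq[of j ?N w] i j by simp
    have "cmod (of_real (Imat n i i * A i j) * (v i * w j)) = \<bar>Imat n i i\<bar> * \<bar>A i j\<bar> * (cmod (v i) * cmod (w j))"
      by (simp add: norm_mult abs_mult)
    also have "\<dots> \<le> 1 * \<bar>A i j\<bar> * (cmod (v i) * cmod (w j))"
      by (intro mult_right_mono d) auto
    also have "\<dots> \<le> \<bar>A i j\<bar> * ((nsq ?N v + nsq ?N w) / 2)"
    proof -
      have c: "cmod (v i) * cmod (w j) \<le> (nsq ?N v + nsq ?N w) / 2" using a b by linarith
      show ?thesis using mult_left_mono[OF c, of "\<bar>A i j\<bar>"] by simp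
    qed
    finally show "cmod (of_real (Imat n i i * A i j) * (v i * w j)) \<le> \<bar>A i j\<bar> * ((nsq ?N v + nsq ?N w) / 2)" .
  qed
  also have "\<dots> = msum ?N A * ((nsq ?N v + nsq ?N w) / 2)"
    unfolding msum_def by (simp add: sum_distrib_right)
  finally show ?thesis .
qed

lemma nsq_cnj: "nsq N (\<lambda>i. cnj (v i)) = nsq N v"
  unfolding nsq_def by simp

lemma nsq_Imat: "nsq (n+2) (cmatvec (n+2) (Imat n) v) = nsq (n+2) v"
  unfolding nsq_def
proof (rule sum.cong[OF refl])
  fix i assume "i \<in> {..<n+2}"
  then have i: "i < n+2" by simp
  have "cmatvec (n+2) (Imat n) v i = of_real (Imat n i i) * v i"
    using i by (simp add: cmatvec_in sum_Imat_row_c)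
  moreover have "\<bar>Imat n i i\<bar> = 1" using i by (simp add: Imat_def)
  ultimately show "(cmod (cmatvec (n+2) (Imat n) v i))^2 = (cmod (v i))^2" by (simp add: norm_mult)
qed

lemma Hf_bound: "cmod (Hf n J v v) \<le> msum (n+2) J * nsq (n+2) v"
  using Omega_bound[of n v J "\<lambda>i. cnj (v i)"] unfolding Hf_def by (simp add: nsq_cnj)

lemma nsq_le_Hf:
  assumes J: "J \<in> Jspace n"
  shows "nsq (n+2) v \<le> msum (n+2) J * Re (Hf n J v v)"
proof -
  let ?N = "n+2"
  define w where "w = cmatvec ?N J (cmatvec ?N (Imat n) v)"
  have "Hf n J v w = Omega n v (cmatvec ?N J (cmatvec ?N J (cmatvec ?N (Imat n) (\<lambda>i. cnj (v i)))))"
    unfolding Hf_def w_def by (simp add: cnj_cmatvec)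
  also have "\<dots> = Omega n v (cmatvec ?N (Imat n) (\<lambda>i. cnj (v i)))"
    by (rule Omega_cong) (simp_all add: Jspace_JJ[OF J])
  also have "\<dots> = of_real (nsq ?N v)"
    unfolding Omega_def nsq_def of_real_sum
  proof (rule sum.cong[OF refl])
    fix i assume "i \<in> {..<?N}"
    then have i: "i < ?N" by simp
    have cm: "cmatvec ?N (Imat n) (\<lambda>i. cnj (v i)) i = of_real (Imat n i i) * cnj (v i)"
      using i by (simp add: cmatvec_in sum_Imat_row_c)
    have "Imat n i i * Imat n i i = 1" using i by (rule Imat_sq)
    have "of_real (Imat n i i) * v i * cmatvec ?N (Imat n) (\<lambda>i. cnj (v i)) i
       = of_real (Imat n i i * Imat n i i) * (v i * cnj (v i))" unfolding cm of_real_mult by (simp only: mult_ac)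
    also have "\<dots> = of_real ((cmod (v i))^2)"
      using \<open>Imat n i i * Imat n i i = 1\<close> by (simp only: complex_norm_square[symmetric]) simp
    finally show "of_real (Imat n i i) * v i * cmatvec ?N (Imat n) (\<lambda>i. cnj (v i)) i = of_real ((cmod (v i))^2)" .
  qed
  finally have hw: "Hf n J v w = of_real (nsq ?N v)" .
  have "Hf n J w w = Hf n J (cmatvec ?N (Imat n) v) (cmatvec ?N (Imat n) v)"
    unfolding w_def by (rule Hf_J_inv[OF J])
  hence "Re (Hf n J w w) \<le> msum ?N J * nsq ?N v"
    using Hf_bound[of n J "cmatvec ?N (Imat n) v"] nsq_Imat[of n v]
    by (metis abs_Re_le_cmod abs_le_D1 order_trans)
  have cs: "(nsq ?N v)^2 \<le> Re (Hf n J v v) * Re (Hf n J w w)"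
    using Hf_CS[OF J, of v w] hw by simp
  also have "\<dots> \<le> Re (Hf n J v v) * (msum ?N J * nsq ?N v)"
    using \<open>Re (Hf n J w w) \<le> _\<close> Hf_nonneg[OF J, of v] by (intro mult_left_mono) auto
  finally have "nsq ?N v * nsq ?N v \<le> (msum ?N J * Re (Hf n J v v)) * nsq ?N v"
    by (simp add: power2_eq_square mult_ac)
  then show ?thesis
  proof (cases "nsq ?N v = 0")
    case True
    then show ?thesis using Hf_nonneg[OF J, of v] msum_nonneg[of ?N J] by simp
  next
    case False
    then have "nsq ?N v > 0" using nsq_nonneg[of ?N v] by simp
    then show ?thesis using \<open>nsq ?N v * nsq ?N v \<le> _\<close> by (simp add: mult_le_cancel_right)
  qed
qed

lemma O_inj:
  assumes A: "A \<in> O_n2 n" and z: "\<And>i. i < n+2 \<Longrightarrow> cmatvec (n+2) A v i = 0" and i: "i < n+2"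
  shows "v i = 0"
proof -
  define e where "e = (\<lambda>j. if j = i then (1::complex) else 0)"
  have "Omega n (cmatvec (n+2) A v) (cmatvec (n+2) A e) = Omega n v e" by (rule Omega_O[OF A])
  moreover have "Omega n (cmatvec (n+2) A v) (cmatvec (n+2) A e) = Omega n (\<lambda>_. 0) (cmatvec (n+2) A e)"
    by (rule Omega_cong) (simp_all add: z)
  moreover have "Omega n (\<lambda>_. 0) (cmatvec (n+2) A e) = 0" by (simp add: Omega_def)
  moreover have "Omega n v e = of_real (Imat n i i) * v i"
    unfolding Omega_def e_def using i by (simp add: if_distrib sum.delta cong: if_cong)
  moreover have "Imat n i i \<noteq> 0" using i by (simp add: Imat_def)
  ultimately show ?thesis by simp
qed


declare sum.lessThan_Suc[simp del] add_2_eq_Suc[simp del] add_2_eq_Suc'[simp del]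

lemma smooth_cnj:
  fixes f :: "real \<Rightarrow> complex"
  assumes "smooth_fun f"
  shows "smooth_fun (\<lambda>x. cnj (f x))"
proof -
  from assms obtain D where D: "D 0 = f" "\<And>k x. (D k has_vector_derivative D (Suc k) x) (at x)"
    unfolding smooth_fun_def by blast
  show ?thesis unfolding smooth_fun_def
    by (rule exI[of _ "\<lambda>k x. cnj (D k x)"]) (auto simp: D(1)[symmetric] intro!: has_vector_derivative_cnj D(2))
qed

lemma smooth_differentiable:
  assumes "smooth_fun f"
  shows "f differentiable at x"
proof -
  from assms obtain D where D: "D 0 = f" "\<And>k x. (D k has_vector_derivative D (Suc k) x) (at x)"
    unfolding smooth_fun_def by blast
  show ?thesis using D(2)[of 0 x] D(1) by (auto simp: vector_derivative_works[symmetric] differentiable_def has_vector_derivative_def)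
qed

lemma bsection_cnj:
  assumes "bsection n c L g s"
  shows "bsection n c L g (\<lambda>k x i. cnj (s k x i))"
  using assms unfolding bsection_def
  by (auto intro!: smooth_cnj simp: cnj_cmatvec[symmetric, THEN fun_cong])

lemma eigensection_cnj:
  assumes e: "eigensection n c L g Jb lam s"
  shows "eigensection n c L g Jb (-lam) (\<lambda>k x i. cnj (s k x i))"
  unfolding eigensection_def
proof (intro conjI allI impI)
  show "bsection n c L g (\<lambda>k x i. cnj (s k x i))"
    using e by (intro bsection_cnj) (simp add: eigensection_def)
  fix k x i assume k: "k < c" and i: "i < n+2"
  have sm: "smooth_fun (\<lambda>x. s k x j)" for j using e k by (simp add: eigensection_def bsection_def)
  have vd: "vector_derivative (\<lambda>t. cnj (s k t j)) (at x) = cnj (vector_derivative (\<lambda>t. s k t j) (at x))" for j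
    by (rule vector_derivative_cnj[OF smooth_differentiable[OF sm]])
  have eq: "\<i> * (\<Sum>j<n+2. complex_of_real (Jb k x i j) * vector_derivative (\<lambda>t. s k t j) (at x))
        = complex_of_real lam * s k x i" using e k i by (simp add: eigensection_def)
  have "cnj (\<i> * (\<Sum>j<n+2. complex_of_real (Jb k x i j) * vector_derivative (\<lambda>t. s k t j) (at x)))
        = cnj (complex_of_real lam * s k x i)" using eq by simp
  hence "- \<i> * (\<Sum>j<n+2. complex_of_real (Jb k x i j) * cnj (vector_derivative (\<lambda>t. s k t j) (at x)))
        = complex_of_real lam * cnj (s k x i)" by (simp add: cnj_sum)
  hence "\<i> * (\<Sum>j<n+2. complex_of_real (Jb k x i j) * cnj (vector_derivative (\<lambda>t. s k t j) (at x)))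
        = complex_of_real (-lam) * cnj (s k x i)"
    by (metis minus_mult_left minus_equation_iff of_real_minus)
  then show "\<i> * (\<Sum>j<n+2. complex_of_real (Jb k x i j) * vector_derivative (\<lambda>t. cnj (s k t j)) (at x))
        = complex_of_real (-lam) * cnj (s k x i)" by (simp add: vd)
qed

lemma lin_indep_cnj:
  assumes "lin_indep_sections m S"
  shows "lin_indep_sections m (\<lambda>j k x i. cnj (S j k x i))"
  unfolding lin_indep_sections_def
proof (rule allI, rule impI)
  fix a :: "nat \<Rightarrow> complex"
  assume h: "\<forall>k x i. (\<Sum>j<m. a j * cnj (S j k x i)) = 0"
  have "\<forall>k x i. (\<Sum>j<m. cnj (a j) * S j k x i) = 0"
  proof (intro allI)
    fix k x i
    have "cnj (\<Sum>j<m. cnj (a j) * S j k x i) = (\<Sum>j<m. a j * cnj (S j k x i))" by (simp add: cnj_sum)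
    then show "(\<Sum>j<m. cnj (a j) * S j k x i) = 0" using h by (metis complex_cnj_zero_iff)
  qed
  note hh = this
  have li: "\<And>b. (\<forall>k x i. (\<Sum>j<m. b j * S j k x i) = 0) \<Longrightarrow> \<forall>j<m. b j = 0"
    using assms unfolding lin_indep_sections_def by blast
  have "\<forall>j<m. cnj (a j) = 0" using li[where b="\<lambda>j. cnj (a j)"] hh by blast
  then show "\<forall>j<m. a j = 0" by simp
qed

lemma eig_set_sub:
  "{m. \<exists>S. (\<forall>j<m. eigensection n c L g Jb lam (S j)) \<and> lin_indep_sections m S}
   \<subseteq> {m. \<exists>S. (\<forall>j<m. eigensection n c L g Jb (-lam) (S j)) \<and> lin_indep_sections m S}"
proof
  fix m assume "m \<in> {m. \<exists>S. (\<forall>j<m. eigensection n c L g Jb lam (S j)) \<and> lin_indep_sections m S}"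
  then obtain S where S: "\<forall>j<m. eigensection n c L g Jb lam (S j)" "lin_indep_sections m S" by blast
  show "m \<in> {m. \<exists>S. (\<forall>j<m. eigensection n c L g Jb (-lam) (S j)) \<and> lin_indep_sections m S}"
    using S by (intro CollectI exI[of _ "\<lambda>j k x i. cnj (S j k x i)"]) (auto intro: eigensection_cnj lin_indep_cnj)
qed

lemma eig_mult_sym: "eig_mult n c L g Jb (-lam) = eig_mult n c L g Jb lam"
proof -
  have "{m. \<exists>S. (\<forall>j<m. eigensection n c L g Jb lam (S j)) \<and> lin_indep_sections m S}
   = {m. \<exists>S. (\<forall>j<m. eigensection n c L g Jb (-lam) (S j)) \<and> lin_indep_sections m S}"
    using eig_set_sub[of n c L g Jb lam] eig_set_sub[of n c L g Jb "-lam"] by auto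
  then show ?thesis unfolding eig_mult_def by simp
qed


declare sum.lessThan_Suc[simp del] add_2_eq_Suc[simp del] add_2_eq_Suc'[simp del]

lemma Omega_cmv_expand:
  "Omega n v (cmatvec (n+2) A w) = (\<Sum>i<n+2. of_real (Imat n i i) * v i * (\<Sum>j<n+2. of_real (A i j) * w j))"
  unfolding Omega_def by (rule sum.cong) (simp_all add: cmatvec_in)

lemma Hf_expand:
  "Hf n J v w = (\<Sum>i<n+2. of_real (Imat n i i) * v i * (\<Sum>j<n+2. of_real (J i j) * cnj (w j)))"
  unfolding Hf_def Omega_cmv_expand ..

lemma Hf_deriv:
  assumes Jd: "\<And>i j. ((\<lambda>t. J t i j) has_real_derivative Jd i j) (at x within S)"
    and ud: "\<And>i. ((\<lambda>t. u t i) has_vector_derivative ud i) (at x within S)"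
    and wd: "\<And>i. ((\<lambda>t. w t i) has_vector_derivative wd i) (at x within S)"
  shows "((\<lambda>t. Hf n (J t) (u t) (w t)) has_vector_derivative
     (Hf n (J x) ud (w x) + Omega n (u x) (cmatvec (n+2) Jd (\<lambda>i. cnj (w x i))) + Hf n (J x) (u x) wd))
     (at x within S)"
proof -
  let ?N = "n+2"
  have Jv: "((\<lambda>t. complex_of_real (J t i j)) has_vector_derivative of_real (Jd i j)) (at x within S)" for i j
    by (rule has_vector_derivative_of_real[OF Jd])
  have "((\<lambda>t. \<Sum>i<?N. of_real (Imat n i i) * u t i * (\<Sum>j<?N. of_real (J t i j) * cnj (w t j))) has_vector_derivative
     (\<Sum>i<?N. of_real (Imat n i i) * u x i * (\<Sum>j<?N. of_real (J x i j) * cnj (wd j) + of_real (Jd i j) * cnj (w x j))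
        + of_real (Imat n i i) * ud i * (\<Sum>j<?N. of_real (J x i j) * cnj (w x j)))) (at x within S)"
    by (intro has_vector_derivative_sum has_vector_derivative_mult has_vector_derivative_mult_right
        ud Jv has_vector_derivative_cnj wd)
  moreover have "(\<Sum>i<?N. of_real (Imat n i i) * u x i * (\<Sum>j<?N. of_real (J x i j) * cnj (wd j) + of_real (Jd i j) * cnj (w x j))
        + of_real (Imat n i i) * ud i * (\<Sum>j<?N. of_real (J x i j) * cnj (w x j)))
     = Hf n (J x) ud (w x) + Omega n (u x) (cmatvec (n+2) Jd (\<lambda>i. cnj (w x i))) + Hf n (J x) (u x) wd"
    unfolding Hf_expand Omega_cmv_expand
    by (simp add: sum.distrib distrib_left algebra_simps)
  ultimately show ?thesis unfolding Hf_expand by simp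
qed

lemma Omega_self_real: "Im (Omega n v (\<lambda>i. cnj (v i))) = 0"
proof -
  have "cnj (Omega n v (\<lambda>i. cnj (v i))) = Omega n v (\<lambda>i. cnj (v i))"
    unfolding cnj_Omega by (simp add: Omega_sym)
  then show ?thesis by (metis Reals_cnj_iff complex_is_Real_iff)
qed

lemma two_le_sum: "(z::real)^2 \<le> p * q \<Longrightarrow> p \<ge> 0 \<Longrightarrow> q \<ge> 0 \<Longrightarrow> 2 * z \<le> p + q"
proof -
  assume h: "z^2 \<le> p * q" "p \<ge> 0" "q \<ge> 0"
  have "0 \<le> (p - q)^2" by simp
  hence "4 * (p * q) \<le> (p + q)^2" by (simp add: power2_eq_square algebra_simps)
  hence "(2 * z)^2 \<le> (p + q)^2" using h(1) by (simp add: power_mult_distrib)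
  hence "\<bar>2 * z\<bar> \<le> \<bar>p + q\<bar>" by (simp only: abs_le_square_iff)
  thus ?thesis using h by linarith
qed

lemma energy_pointwise:
  assumes J: "J \<in> Jspace n"
    and ud: "\<And>i. i < n+2 \<Longrightarrow> ud i = - \<i> * cmatvec (n+2) J (\<lambda>l. of_real a * u l + f l) i"
  shows "Re (Hf n J ud u + Omega n u (cmatvec (n+2) Jd (\<lambda>i. cnj (u i))) + Hf n J u ud)
     \<le> (1 + msum (n+2) Jd * msum (n+2) J) * Re (Hf n J u u) + Re (Hf n J f f)"
proof -
  let ?N = "n+2"
  define w where "w = (\<lambda>l. of_real a * u l + f l)"
  define z where "z = Omega n f (\<lambda>i. cnj (u i))"
  define e where "e = Re (Hf n J u u)"
  define \<phi> where "\<phi> = Re (Hf n J f f)"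
  have e0: "e \<ge> 0" "\<phi> \<ge> 0" unfolding e_def \<phi>_def by (simp_all add: Hf_nonneg[OF J])
  have "Hf n J ud u = Hf n J (\<lambda>i. - \<i> * cmatvec ?N J w i) u"
    by (rule Hf_cong) (simp_all add: ud w_def)
  also have "\<dots> = - \<i> * Hf n J (cmatvec ?N J w) u" by (rule Hf_scale_left)
  also have "Hf n J (cmatvec ?N J w) u = Omega n w (\<lambda>i. cnj (u i))"
    unfolding Hf_def by (rule Omega_O[OF Jspace_O[OF J]])
  also have "\<dots> = of_real a * Omega n u (\<lambda>i. cnj (u i)) + z"
    unfolding w_def z_def Omega_add_left Omega_scale_left ..
  finally have h1: "Hf n J ud u = - \<i> * (of_real a * Omega n u (\<lambda>i. cnj (u i)) + z)" .
  have "Re (Hf n J ud u) = Im z" unfolding h1 using Omega_self_real[of n u] by simp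
  moreover have "Re (Hf n J u ud) = Re (Hf n J ud u)"
  proof -
    have "Hf n J u ud = cnj (Hf n J ud u)" using Hf_herm[OF J, of ud u] by simp
    then show ?thesis by simp
  qed
  ultimately have r1: "Re (Hf n J ud u + Hf n J u ud) = 2 * Im z" by simp
  have "z = Hf n J f (cmatvec ?N J u)" unfolding z_def by (rule Omega_as_Hf[OF J])
  hence "(cmod z)^2 \<le> \<phi> * e"
    using Hf_CS[OF J, of f "cmatvec ?N J u"] by (simp add: Hf_J_inv[OF J] \<phi>_def e_def)
  hence "2 * cmod z \<le> \<phi> + e" using e0 by (intro two_le_sum) auto
  hence r2: "2 * Im z \<le> \<phi> + e" using abs_Im_le_cmod[of z] by linarith
  have "Re (Omega n u (cmatvec ?N Jd (\<lambda>i. cnj (u i)))) \<le> cmod (Omega n u (cmatvec ?N Jd (\<lambda>i. cnj (u i))))"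
    by (rule complex_Re_le_cmod)
  also have "\<dots> \<le> msum ?N Jd * nsq ?N u"
    using Omega_bound[of n u Jd "\<lambda>i. cnj (u i)"] by (simp add: nsq_cnj)
  also have "\<dots> \<le> msum ?N Jd * (msum ?N J * e)"
    unfolding e_def by (intro mult_left_mono nsq_le_Hf[OF J] msum_nonneg)
  finally have r3: "Re (Omega n u (cmatvec ?N Jd (\<lambda>i. cnj (u i)))) \<le> msum ?N Jd * msum ?N J * e" by simp
  show ?thesis using r1 r2 r3 unfolding e_def[symmetric] \<phi>_def[symmetric]
    by (simp add: algebra_simps)
qed

lemma smooth_deriv_data:
  assumes "\<And>i j. smooth_fun (\<lambda>x. J x i j :: real)"
  obtains Jd where "\<And>i j x. ((\<lambda>t. J t i j) has_real_derivative Jd x i j) (at x)"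
    and "\<And>i j. continuous_on UNIV (\<lambda>x. Jd x i j)"
proof -
  have "\<forall>p. \<exists>D. D 0 = (\<lambda>x. J x (fst p) (snd p)) \<and> (\<forall>k x. (D k has_vector_derivative D (Suc k) x) (at x))"
  proof
    fix p show "\<exists>D. D 0 = (\<lambda>x. J x (fst p) (snd p)) \<and> (\<forall>k x. (D k has_vector_derivative D (Suc k) x) (at x))"
      using assms[of "fst p" "snd p"] unfolding smooth_fun_def by blast
  qed
  from choice[OF this] obtain D where D: "\<forall>p. D p 0 = (\<lambda>x. J x (fst p) (snd p)) \<and>
     (\<forall>k x. (D p k has_vector_derivative D p (Suc k) x) (at x))"
    by blast
  define Jd where "Jd = (\<lambda>x i j. D (i,j) 1 x)"
  have 1: "((\<lambda>t. J t i j) has_real_derivative Jd x i j) (at x)" for i j x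
  proof -
    have "(D (i,j) 0 has_vector_derivative D (i,j) (Suc 0) x) (at x)" using D by blast
    moreover have "D (i,j) 0 = (\<lambda>x. J x i j)" using D by auto
    ultimately show ?thesis unfolding Jd_def
      by (simp add: has_real_derivative_iff_has_vector_derivative)
  qed
  have 2: "continuous_on UNIV (\<lambda>x. Jd x i j)" for i j
  proof (intro continuous_at_imp_continuous_on ballI)
    fix x
    have "(D (i,j) 1 has_vector_derivative D (i,j) (Suc 1) x) (at x)" using D by blast
    then have "isCont (D (i,j) 1) x" by (rule has_vector_derivative_continuous)
    then show "isCont (\<lambda>x. Jd x i j) x" unfolding Jd_def by simp
  qed
  show ?thesis using that[OF 1 2] .
qed

lemma cont_bound:
  fixes h :: "real \<Rightarrow> real"
  assumes "continuous_on {0..T} h" "T \<ge> 0"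
  obtains M where "\<And>x. x \<in> {0..T} \<Longrightarrow> h x \<le> M"
  using continuous_attains_sup[OF compact_Icc _ assms(1)] assms(2) by fastforce

lemma energy:
  fixes n :: nat and J :: "real \<Rightarrow> rmat" and T :: real
  assumes Jsp: "\<And>x. J x \<in> Jspace n" and Jsm: "\<And>i j. smooth_fun (\<lambda>x. J x i j)" and T: "T \<ge> 0"
  shows "\<exists>E\<ge>0. \<forall>a u ud f. (\<forall>x i. ((\<lambda>t. u t i) has_vector_derivative ud x i) (at x)) \<longrightarrow>
      (\<forall>x. \<forall>i<n+2. ud x i = - \<i> * cmatvec (n+2) (J x) (\<lambda>l. of_real a * u x l + f x l) i) \<longrightarrow>
      (\<forall>i. continuous_on {0..T} (\<lambda>x. f x i)) \<longrightarrow> (\<forall>i<n+2. u 0 i = 0) \<longrightarrow>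
      (\<forall>x\<in>{0..T}. Re (Hf n (J x) (u x) (u x)) \<le> E * integral {0..T} (\<lambda>x. Re (Hf n (J x) (f x) (f x))))"
proof -
  let ?N = "n+2"
  obtain Jd where Jd: "\<And>i j x. ((\<lambda>t. J t i j) has_real_derivative Jd x i j) (at x)"
    and cJd: "\<And>i j. continuous_on UNIV (\<lambda>x. Jd x i j)"
    using smooth_deriv_data[where J=J, OF Jsm] by metis
  have cJ: "continuous_on UNIV (\<lambda>x. J x i j)" for i j
    by (intro continuous_at_imp_continuous_on ballI) (metis Jd DERIV_isCont)
  have cm0: "continuous_on {0..T} (\<lambda>x. msum ?N (J x))"
    unfolding msum_def by (intro continuous_intros continuous_on_subset[OF cJ]) auto
  obtain M0 where M0: "\<And>x. x \<in> {0..T} \<Longrightarrow> msum ?N (J x) \<le> M0" using cont_bound[OF cm0 T] by blast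
  have cm1: "continuous_on {0..T} (\<lambda>x. msum ?N (Jd x))"
    unfolding msum_def by (intro continuous_intros continuous_on_subset[OF cJd]) auto
  obtain M1 where M1: "\<And>x. x \<in> {0..T} \<Longrightarrow> msum ?N (Jd x) \<le> M1" using cont_bound[OF cm1 T] by blast
  have M0p: "M0 \<ge> 0" using M0[of 0] T msum_nonneg[of ?N "J 0"] by auto
  have M1p: "M1 \<ge> 0" using M1[of 0] T msum_nonneg[of ?N "Jd 0"] by auto
  define C where "C = 1 + M1 * M0"
  have Cp: "C \<ge> 0" unfolding C_def using M0p M1p by simp
  define E where "E = exp (C * T)"
  show ?thesis
  proof (rule exI[of _ E], intro conjI allI impI ballI)
    show "E \<ge> 0" unfolding E_def by simp
    fix a u ud f x0
    assume du: "\<forall>x i. ((\<lambda>t. u t i) has_vector_derivative ud x i) (at x)"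
      and ode: "\<forall>x. \<forall>i<n+2. ud x i = - \<i> * cmatvec (n+2) (J x) (\<lambda>l. of_real a * u x l + f x l) i"
      and cf: "\<forall>i. continuous_on {0..T} (\<lambda>x. f x i)"
      and u0: "\<forall>i<n+2. u 0 i = 0"
      and x0: "x0 \<in> {0..T}"
    define e where "e = (\<lambda>t. Re (Hf n (J t) (u t) (u t)))"
    define \<phi> where "\<phi> = (\<lambda>t. Re (Hf n (J t) (f t) (f t)))"
    define Q' where "Q' = (\<lambda>t. Hf n (J t) (ud t) (u t) + Omega n (u t) (cmatvec ?N (Jd t) (\<lambda>i. cnj (u t i)))
       + Hf n (J t) (u t) (ud t))"
    have e0: "e t \<ge> 0" "\<phi> t \<ge> 0" for t unfolding e_def \<phi>_def by (simp_all add: Hf_nonneg[OF Jsp])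
    have de: "(e has_real_derivative Re (Q' t)) (at t)" for t
    proof -
      have "((\<lambda>t. Hf n (J t) (u t) (u t)) has_vector_derivative Q' t) (at t)"
        unfolding Q'_def by (rule Hf_deriv) (use Jd du in auto)
      from bounded_linear.has_vector_derivative[OF bounded_linear_Re this]
      show ?thesis unfolding e_def by (simp add: has_real_derivative_iff_has_vector_derivative)
    qed
    have bnd: "Re (Q' t) \<le> C * e t + \<phi> t" if t: "t \<in> {0..T}" for t
    proof -
      have "Re (Q' t) \<le> (1 + msum ?N (Jd t) * msum ?N (J t)) * e t + \<phi> t"
        unfolding Q'_def e_def \<phi>_def by (rule energy_pointwise[OF Jsp]) (use ode in auto)
      also have "(1 + msum ?N (Jd t) * msum ?N (J t)) * e t \<le> C * e t"
        unfolding C_def using M0[OF t] M1[OF t] msum_nonneg[of ?N "J t"] msum_nonneg[of ?N "Jd t"] e0(1)[of t]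
        by (intro mult_right_mono add_left_mono mult_mono) auto
      finally show ?thesis by simp
    qed
    define h where "h = (\<lambda>t. exp (- C * t) * e t)"
    define h' where "h' = (\<lambda>t. exp (- C * t) * Re (Q' t) + (exp (- C * t) * (- C)) * e t)"
    have dh: "(h has_real_derivative h' t) (at t)" for t
      unfolding h_def h'_def
      by (rule derivative_eq_intros refl de | simp)+
    have h'le: "h' t \<le> \<phi> t" if t: "t \<in> {0..T}" for t
    proof -
      have "h' t = exp (- C * t) * (Re (Q' t) - C * e t)" unfolding h'_def by (simp add: algebra_simps)
      also have "\<dots> \<le> exp (- C * t) * \<phi> t" using bnd[OF t] by (intro mult_left_mono) auto
      also have "\<dots> \<le> 1 * \<phi> t" using Cp t e0(2)[of t] by (intro mult_right_mono) (auto simp: mult_nonneg_nonneg)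
      finally show ?thesis by simp
    qed
    have cphi: "continuous_on {0..T} \<phi>"
      unfolding \<phi>_def Hf_expand
      by (intro continuous_intros continuous_on_subset[OF cJ] cf[rule_format]) auto
    have x0T: "{0..x0} \<subseteq> {0..T}" using x0 by auto
    have "(h' has_integral (h x0 - h 0)) {0..x0}"
      using x0 by (intro fundamental_theorem_of_calculus)
        (auto intro!: has_field_derivative_at_within dh simp flip: has_real_derivative_iff_has_vector_derivative)
    moreover have "(\<phi> has_integral integral {0..x0} \<phi>) {0..x0}"
      by (intro integrable_integral integrable_continuous_interval continuous_on_subset[OF cphi x0T])
    ultimately have "h x0 - h 0 \<le> integral {0..x0} \<phi>"
      by (rule has_integral_le) (use h'le x0T in auto)
    moreover have "h 0 = 0" unfolding h_def e_def using u0 by (simp add: Hf_zero)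
    moreover have "integral {0..x0} \<phi> \<le> integral {0..T} \<phi>"
      by (rule integral_subset_le[OF x0T]) (auto intro: e0 integrable_continuous_interval continuous_on_subset[OF cphi x0T] cphi)
    ultimately have hx: "h x0 \<le> integral {0..T} \<phi>" by simp
    have I0: "integral {0..T} \<phi> \<ge> 0"
      by (rule Henstock_Kurzweil_Integration.integral_nonneg) (auto intro: e0 integrable_continuous_interval cphi)
    have "e x0 = exp (C * x0) * h x0" unfolding h_def by (simp add: exp_minus field_simps)
    also have "\<dots> \<le> exp (C * x0) * integral {0..T} \<phi>" using hx by (intro mult_left_mono) auto
    also have "\<dots> \<le> E * integral {0..T} \<phi>" unfolding E_def using I0 x0 Cp
      by (intro mult_right_mono) (auto intro: mult_left_mono)
    finally show "Re (Hf n (J x0) (u x0) (u x0)) \<le> E * integral {0..T} (\<lambda>x. Re (Hf n (J x) (f x) (f x)))"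
      unfolding e_def \<phi>_def .
  qed
qed


declare sum.lessThan_Suc[simp del] add_2_eq_Suc[simp del] add_2_eq_Suc'[simp del]

definition eigc :: "nat \<Rightarrow> rmat \<Rightarrow> (real \<Rightarrow> rmat) \<Rightarrow> real \<Rightarrow> real \<Rightarrow> (real \<Rightarrow> cvec) \<Rightarrow> bool" where
  "eigc n G J L lam v \<longleftrightarrow> (\<forall>i x. (\<lambda>t. v t i) differentiable at x) \<and> (\<forall>x i. n+2 \<le> i \<longrightarrow> v x i = 0) \<and>
     (\<forall>x. v (x + L) = cmatvec (n+2) G (v x)) \<and>
     (\<forall>x. \<forall>i<n+2. \<i> * (\<Sum>j<n+2. of_real (J x i j) * vector_derivative (\<lambda>t. v t j) (at x)) = of_real lam * v x i)"

lemma eigc_deriv_val: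
  assumes e: "eigc n G J L lam v" and Jsp: "J x \<in> Jspace n"
  shows "vector_derivative (\<lambda>t. v t i) (at x) = - \<i> * of_real lam * cmatvec (n+2) (J x) (v x) i"
proof (cases "i < n+2")
  case True
  define y where "y = (\<lambda>j. vector_derivative (\<lambda>t. v t j) (at x))"
  have Jy: "cmatvec (n+2) (J x) y l = - \<i> * of_real lam * v x l" if l: "l < n+2" for l
  proof -
    have "\<i> * cmatvec (n+2) (J x) y l = of_real lam * v x l"
      using e l unfolding eigc_def y_def by (simp add: cmatvec_in)
    hence "- \<i> * (\<i> * cmatvec (n+2) (J x) y l) = - \<i> * (of_real lam * v x l)" by simp
    thus ?thesis by (simp add: algebra_simps)
  qed
  have "y i = cmatvec (n+2) (J x) (cmatvec (n+2) (J x) y) i" using Jspace_JJ[OF Jsp True] by simp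
  also have "cmatvec (n+2) (J x) (cmatvec (n+2) (J x) y) = cmatvec (n+2) (J x) (\<lambda>l. (- \<i> * of_real lam) * v x l)"
    by (rule cmatvec_cong) (simp add: Jy)
  also have "\<dots> = (\<lambda>l. (- \<i> * of_real lam) * cmatvec (n+2) (J x) (v x) l)" by (rule cmatvec_scale)
  finally show ?thesis unfolding y_def by simp
next
  case False
  hence "(\<lambda>t. v t i) = (\<lambda>t. 0)" using e unfolding eigc_def by auto
  then show ?thesis using False by (simp add: cmatvec_out)
qed

lemma eigc_deriv:
  assumes e: "eigc n G J L lam v" and Jsp: "J x \<in> Jspace n"
  shows "((\<lambda>t. v t i) has_vector_derivative (- \<i> * of_real lam * cmatvec (n+2) (J x) (v x) i)) (at x)"
proof -
  have "(\<lambda>t. v t i) differentiable at x" using e unfolding eigc_def by blast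
  then have "((\<lambda>t. v t i) has_vector_derivative vector_derivative (\<lambda>t. v t i) (at x)) (at x)"
    by (simp add: vector_derivative_works)
  then show ?thesis using eigc_deriv_val[OF e Jsp] by simp
qed

lemma eigc_cont:
  assumes e: "eigc n G J L lam v"
  shows "continuous_on S (\<lambda>t. v t i)"
  using e unfolding eigc_def
  by (intro continuous_at_imp_continuous_on ballI) (simp add: differentiable_imp_continuous_within)

lemma periodic_ext:
  fixes L :: real
  assumes L: "L > 0" and base: "\<And>y. y \<in> {0..L} \<Longrightarrow> P y"
    and fw: "\<And>x. P x \<Longrightarrow> P (x + L)" and bw: "\<And>x. P (x + L) \<Longrightarrow> P x"
  shows "P x"
proof -
  have f: "P (y + real k * L)" if "y \<in> {0..L}" for y k
  proof (induction k)
    case 0 then show ?case using base that by simp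
  next
    case (Suc k) then show ?case using fw[of "y + real k * L"] by (simp add: algebra_simps)
  qed
  have b: "P (y - real k * L)" if "y \<in> {0..L}" for y k
  proof (induction k)
    case 0 then show ?case using base that by simp
  next
    case (Suc k) then show ?case using bw[of "y - real (Suc k) * L"] by (simp add: algebra_simps)
  qed
  show ?thesis
  proof (cases "x \<ge> 0")
    case True
    define k where "k = nat \<lfloor>x / L\<rfloor>"
    have fl: "real k = real_of_int \<lfloor>x / L\<rfloor>" using True L unfolding k_def by simp
    have "real k \<le> x / L" "x / L < real k + 1" unfolding fl using floor_correct[of "x/L"] by linarith+
    hence "real k * L \<le> x" "x < real k * L + L" using L by (simp_all add: field_simps)
    hence "x - real k * L \<in> {0..L}" by auto
    from f[OF this, of k] show ?thesis by simp
  next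
    case False
    define k where "k = nat \<lceil>- x / L\<rceil>"
    have fl: "real k = real_of_int \<lceil>- x / L\<rceil>" using False L unfolding k_def by simp
    have "- x / L \<le> real k" "real k < - x / L + 1" unfolding fl using ceiling_correct[of "- x/L"] by linarith+
    hence "- x \<le> real k * L" "real k * L < - x + L" using L by (simp_all add: field_simps)
    hence "x + real k * L \<in> {0..L}" by auto
    from b[OF this, of k] show ?thesis by simp
  qed
qed

lemma eigc_zero_ext:
  assumes e: "eigc n G J L lam v" and G: "G \<in> O_n2 n" and L: "L > 0"
    and z: "\<And>x i. x \<in> {0..L} \<Longrightarrow> i < n+2 \<Longrightarrow> v x i = 0"
  shows "v x i = 0"
proof -
  have sup: "\<And>x i. n+2 \<le> i \<Longrightarrow> v x i = 0" and per: "\<And>x. v (x + L) = cmatvec (n+2) G (v x)"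
    using e unfolding eigc_def by auto
  have "\<forall>i. v x i = 0"
  proof (rule periodic_ext[OF L, of "\<lambda>x. \<forall>i. v x i = 0"])
    show "\<forall>i. v y i = 0" if "y \<in> {0..L}" for y using z[OF that] sup by (metis not_less)
    show "\<forall>i. v (y + L) i = 0" if "\<forall>i. v y i = 0" for y
      using that per[of y] by (simp add: cmatvec_def)
    show "\<forall>i. v y i = 0" if h: "\<forall>i. v (y + L) i = 0" for y
    proof
      fix i
      show "v y i = 0"
      proof (cases "i < n+2")
        case True
        show ?thesis by (rule O_inj[OF G _ True]) (use h per[of y] in simp)
      qed (simp add: sup)
    qed
  qed
  then show ?thesis by simp
qed

lemma eigc_orth:
  assumes ev: "eigc n G J L lam v" and ew: "eigc n G J L mu w" and G: "G \<in> O_n2 n"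
    and Jsp: "\<And>x. J x \<in> Jspace n" and L: "L \<ge> 0" and ne: "lam \<noteq> mu"
  shows "((\<lambda>x. Hf n (J x) (v x) (w x)) has_integral 0) {0..L}"
proof -
  let ?N = "n+2"
  define F where "F = (\<lambda>x. Omega n (v x) (\<lambda>i. cnj (w x i)))"
  define c where "c = - \<i> * of_real (lam - mu)"
  have dF: "(F has_vector_derivative c * Hf n (J x) (v x) (w x)) (at x)" for x
  proof -
    define vd where "vd = (\<lambda>i. - \<i> * of_real lam * cmatvec ?N (J x) (v x) i)"
    define wd where "wd = (\<lambda>i. - \<i> * of_real mu * cmatvec ?N (J x) (w x) i)"
    have "((\<lambda>t. \<Sum>i<?N. of_real (Imat n i i) * v t i * cnj (w t i)) has_vector_derivative
       (\<Sum>i<?N. of_real (Imat n i i) * v x i * cnj (wd i) + of_real (Imat n i i) * vd i * cnj (w x i))) (at x)"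
      unfolding vd_def wd_def
      by (intro has_vector_derivative_sum has_vector_derivative_mult has_vector_derivative_mult_right
          has_vector_derivative_cnj eigc_deriv[OF ev Jsp] eigc_deriv[OF ew Jsp])
    moreover have "(\<Sum>i<?N. of_real (Imat n i i) * v x i * cnj (wd i) + of_real (Imat n i i) * vd i * cnj (w x i))
       = Omega n (v x) (\<lambda>i. cnj (wd i)) + Omega n vd (\<lambda>i. cnj (w x i))"
      unfolding Omega_def by (simp add: sum.distrib)
    moreover have "Omega n vd (\<lambda>i. cnj (w x i)) = (- \<i> * of_real lam) * Hf n (J x) (v x) (w x)"
      unfolding vd_def Omega_scale_left Hf_def Omega_J_sym[OF Jsp] ..
    moreover have "Omega n (v x) (\<lambda>i. cnj (wd i)) = (\<i> * of_real mu) * Hf n (J x) (v x) (w x)"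
    proof -
      have "(\<lambda>i. cnj (wd i)) = (\<lambda>i. (\<i> * of_real mu) * cmatvec ?N (J x) (\<lambda>i. cnj (w x i)) i)"
        unfolding wd_def by (simp add: cnj_cmatvec[symmetric, THEN fun_cong])
      then show ?thesis unfolding Hf_def by (simp add: Omega_scale_right)
    qed
    ultimately show ?thesis unfolding F_def Omega_def c_def by (simp add: algebra_simps)
  qed
  have "((\<lambda>x. c * Hf n (J x) (v x) (w x)) has_integral (F L - F 0)) {0..L}"
    using L by (intro fundamental_theorem_of_calculus) (auto intro: has_vector_derivative_at_within dF)
  moreover have "F L = F 0"
  proof -
    have vL: "v L = cmatvec ?N G (v 0)" and wL: "w L = cmatvec ?N G (w 0)"
      using ev ew unfolding eigc_def by (metis add_0)+
    have "F L = Omega n (cmatvec ?N G (v 0)) (cmatvec ?N G (\<lambda>i. cnj (w 0 i)))"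
      unfolding F_def vL wL by (simp add: cnj_cmatvec)
    also have "\<dots> = F 0" unfolding F_def by (rule Omega_O[OF G])
    finally show ?thesis .
  qed
  ultimately have "((\<lambda>x. c * Hf n (J x) (v x) (w x)) has_integral 0) {0..L}" by simp
  moreover have "c \<noteq> 0" using ne unfolding c_def by simp
  ultimately show ?thesis by (simp add: has_integral_mult_right_iff)
qed

lemma eigc_sum:
  assumes P: "finite P" and e: "\<And>p. p \<in> P \<Longrightarrow> eigc n G J L lam (S p)"
  shows "eigc n G J L lam (\<lambda>x i. \<Sum>p\<in>P. cf p * S p x i)"
proof -
  let ?N = "n+2"
  have d: "(\<lambda>t. S p t i) differentiable at x" if "p \<in> P" for p i x using e[OF that] unfolding eigc_def by blast
  have hd: "((\<lambda>t. \<Sum>p\<in>P. cf p * S p t i) has_vector_derivative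
      (\<Sum>p\<in>P. cf p * vector_derivative (\<lambda>t. S p t i) (at x))) (at x)" for i x
    by (intro has_vector_derivative_sum has_vector_derivative_mult_right) (simp add: vector_derivative_works[symmetric] d)
  have vd: "vector_derivative (\<lambda>t. \<Sum>p\<in>P. cf p * S p t i) (at x) =
      (\<Sum>p\<in>P. cf p * vector_derivative (\<lambda>t. S p t i) (at x))" for i x
    using hd by (rule vector_derivative_at)
  show ?thesis unfolding eigc_def
  proof (intro conjI allI impI)
    fix i x show "(\<lambda>t. \<Sum>p\<in>P. cf p * S p t i) differentiable at x"
      using hd[of i x] unfolding differentiable_def has_vector_derivative_def by blast
  next
    fix x i assume "n+2 \<le> i" then show "(\<Sum>p\<in>P. cf p * S p x i) = 0"
      using e unfolding eigc_def by simp
  next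
    fix x
    have "S p (x + L) = cmatvec ?N G (S p x)" if "p \<in> P" for p using e[OF that] unfolding eigc_def by blast
    then show "(\<lambda>i. \<Sum>p\<in>P. cf p * S p (x + L) i) = cmatvec ?N G (\<lambda>i. \<Sum>p\<in>P. cf p * S p x i)"
      by (simp add: cmatvec_sum cmatvec_scale)
  next
    fix x i assume i: "i < n+2"
    have "\<i> * (\<Sum>j<?N. of_real (J x i j) * vector_derivative (\<lambda>t. \<Sum>p\<in>P. cf p * S p t j) (at x))
        = (\<Sum>p\<in>P. cf p * (\<i> * (\<Sum>j<?N. of_real (J x i j) * vector_derivative (\<lambda>t. S p t j) (at x))))"
      unfolding vd by (simp add: sum_distrib_left sum_distrib_right mult_ac sum.swap[of _ P])
    also have "\<dots> = (\<Sum>p\<in>P. cf p * (of_real lam * S p x i))"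
      using e i unfolding eigc_def by (intro sum.cong) auto
    also have "\<dots> = of_real lam * (\<Sum>p\<in>P. cf p * S p x i)"
      by (simp add: sum_distrib_left mult_ac)
    finally show "\<i> * (\<Sum>j<?N. of_real (J x i j) * vector_derivative (\<lambda>t. \<Sum>p\<in>P. cf p * S p t j) (at x))
        = of_real lam * (\<Sum>p\<in>P. cf p * S p x i)" .
  qed
qed


declare sum.lessThan_Suc[simp del] add_2_eq_Suc[simp del] add_2_eq_Suc'[simp del]

lemma smooth_cont: "smooth_fun f \<Longrightarrow> continuous_on S f"
  by (intro continuous_at_imp_continuous_on ballI differentiable_imp_continuous_within smooth_differentiable)

lemma circle_core:
  fixes n :: nat and G :: rmat and J :: "real \<Rightarrow> rmat" and L :: real
  assumes L: "L > 0" and G: "G \<in> O_n2 n" and Jsp: "\<And>x. J x \<in> Jspace n"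
    and Jsm: "\<And>i j. smooth_fun (\<lambda>x. J x i j)"
  shows "\<exists>\<delta>>0. \<forall>a \<Lambda> V. finite \<Lambda> \<longrightarrow> \<Lambda> \<subseteq> {a..a+\<delta>} \<longrightarrow> (\<forall>lam\<in>\<Lambda>. eigc n G J L lam (V lam)) \<longrightarrow>
     (\<forall>i<n+2. (\<Sum>lam\<in>\<Lambda>. V lam 0 i) = 0) \<longrightarrow> (\<forall>lam\<in>\<Lambda>. \<forall>x i. V lam x i = 0)"
proof -
  let ?N = "n+2"
  obtain E where E0: "E \<ge> 0" and En: "\<forall>a u ud f. (\<forall>x i. ((\<lambda>t. u t i) has_vector_derivative ud x i) (at x)) \<longrightarrow>
      (\<forall>x. \<forall>i<n+2. ud x i = - \<i> * cmatvec (n+2) (J x) (\<lambda>l. of_real a * u x l + f x l) i) \<longrightarrow>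
      (\<forall>i. continuous_on {0..L} (\<lambda>x. f x i)) \<longrightarrow> (\<forall>i<n+2. u 0 i = 0) \<longrightarrow>
      (\<forall>x\<in>{0..L}. Re (Hf n (J x) (u x) (u x)) \<le> E * integral {0..L} (\<lambda>x. Re (Hf n (J x) (f x) (f x))))"
    using energy[OF Jsp Jsm, of L] L by auto
  define \<delta> where "\<delta> = 1 / (2 * (1 + E) * (1 + L))"
  have dpos: "\<delta> > 0" unfolding \<delta>_def using E0 L by simp
  have dle: "\<delta> \<le> 1/2"
  proof -
    have "1 \<le> (1 + E) * (1 + L)" using E0 L by (simp add: algebra_simps mult_nonneg_nonneg)
    then show ?thesis unfolding \<delta>_def by (simp add: field_simps)
  qed
  have key: "L * E * \<delta>^2 \<le> 1/2"
  proof -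
    have "L * E \<le> (1 + E) * (1 + L)" using E0 L by (simp add: algebra_simps mult_nonneg_nonneg)
    hence "L * E * \<delta> \<le> (1 + E) * (1 + L) * \<delta>" using dpos by (intro mult_right_mono) auto
    also have "(1 + E) * (1 + L) * \<delta> = 1/2"
    proof -
      have pp: "(1 + E) * (1 + L) \<noteq> 0" using E0 L by (simp add: add_pos_nonneg)
      show ?thesis unfolding \<delta>_def using pp by (simp add: field_simps)
    qed
    finally have "L * E * \<delta> \<le> 1/2" .
    hence "L * E * \<delta> * \<delta> \<le> 1/2 * \<delta>" using dpos by (intro mult_right_mono) auto
    also have "\<dots> \<le> 1/2" using dle by simp
    finally show ?thesis by (simp add: power2_eq_square mult.assoc)
  qed
  have cJ: "continuous_on S (\<lambda>x. J x i j)" for i j S by (rule smooth_cont[OF Jsm])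
  show ?thesis
  proof (rule exI[of _ \<delta>], intro conjI allI impI dpos)
    fix a \<Lambda> V
    assume fin: "finite \<Lambda>" and sub: "\<Lambda> \<subseteq> {a..a+\<delta>}" and eig: "\<forall>lam\<in>\<Lambda>. eigc n G J L lam (V lam)"
      and z0: "\<forall>i<n+2. (\<Sum>lam\<in>\<Lambda>. V lam 0 i) = 0"
    define s where "s = (\<lambda>x i. \<Sum>lam\<in>\<Lambda>. V lam x i)"
    define f where "f = (\<lambda>x i. \<Sum>lam\<in>\<Lambda>. of_real (lam - a) * V lam x i)"
    define H where "H = (\<lambda>lam mu x. Re (Hf n (J x) (V lam x) (V mu x)))"
    define r where "r = (\<lambda>lam mu. integral {0..L} (H lam mu))"
    have cV: "continuous_on S (\<lambda>t. V lam t i)" if "lam \<in> \<Lambda>" for lam i S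
      using eig that by (intro eigc_cont) auto
    have cH: "continuous_on {0..L} (H lam mu)" if "lam \<in> \<Lambda>" "mu \<in> \<Lambda>" for lam mu
      unfolding H_def Hf_expand by (intro continuous_intros cV cJ that)
    have iH: "H lam mu integrable_on {0..L}" if "lam \<in> \<Lambda>" "mu \<in> \<Lambda>" for lam mu
      by (rule integrable_continuous_interval[OF cH[OF that]])
    have orth: "r lam mu = 0" if "lam \<in> \<Lambda>" "mu \<in> \<Lambda>" "lam \<noteq> mu" for lam mu
    proof -
      have "((\<lambda>x. Hf n (J x) (V lam x) (V mu x)) has_integral 0) {0..L}"
        using eig that L G Jsp by (intro eigc_orth) auto
      from has_integral_linear[OF this bounded_linear_Re]
      have "(H lam mu has_integral 0) {0..L}" unfolding H_def by (simp add: o_def)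
      then show ?thesis unfolding r_def by (rule integral_unique)
    qed
    have Hnn: "H lam lam x \<ge> 0" for lam x unfolding H_def by (rule Hf_nonneg[OF Jsp])
    have rnn: "r lam lam \<ge> 0" if "lam \<in> \<Lambda>" for lam
      unfolding r_def by (rule Henstock_Kurzweil_Integration.integral_nonneg[OF iH[OF that that]]) (rule Hnn)
    have diag: "(\<Sum>mu\<in>\<Lambda>. c lam mu * r lam mu) = c lam lam * r lam lam" if "lam \<in> \<Lambda>" for c lam
    proof -
      have "(\<Sum>mu\<in>\<Lambda>. c lam mu * r lam mu) = (\<Sum>mu\<in>\<Lambda>. if mu = lam then c lam lam * r lam lam else 0)"
        by (rule sum.cong) (use orth that in auto)
      also have "\<dots> = c lam lam * r lam lam" using fin that by (simp add: sum.delta')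
      finally show ?thesis .
    qed
    have ps: "Re (Hf n (J x) (s x) (s x)) = (\<Sum>lam\<in>\<Lambda>. \<Sum>mu\<in>\<Lambda>. H lam mu x)" for x
      unfolding s_def H_def Hf_sum_left Hf_sum_right by (simp add: Re_sum)
    have pf: "Re (Hf n (J x) (f x) (f x)) = (\<Sum>lam\<in>\<Lambda>. \<Sum>mu\<in>\<Lambda>. ((lam - a) * (mu - a)) * H lam mu x)" for x
      unfolding f_def H_def Hf_sum_left Hf_sum_right Hf_scale_left Hf_scale_right by (simp add: Re_sum mult_ac)
    define S where "S = integral {0..L} (\<lambda>x. Re (Hf n (J x) (s x) (s x)))"
    define \<Phi> where "\<Phi> = integral {0..L} (\<lambda>x. Re (Hf n (J x) (f x) (f x)))"
    have S_eq: "S = (\<Sum>lam\<in>\<Lambda>. r lam lam)"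
    proof -
      have "S = (\<Sum>lam\<in>\<Lambda>. \<Sum>mu\<in>\<Lambda>. r lam mu)"
        unfolding S_def ps r_def using fin iH
        by (subst Henstock_Kurzweil_Integration.integral_sum)
           (auto intro!: Henstock_Kurzweil_Integration.integrable_sum sum.cong Henstock_Kurzweil_Integration.integral_sum)
      also have "\<dots> = (\<Sum>lam\<in>\<Lambda>. r lam lam)"
        using diag[of _ "\<lambda>_ _. 1"] by (intro sum.cong) auto
      finally show ?thesis .
    qed
    have Phi_eq: "\<Phi> = (\<Sum>lam\<in>\<Lambda>. ((lam - a) * (lam - a)) * r lam lam)"
    proof -
      have iH': "(\<lambda>x. ((lam - a) * (mu - a)) * H lam mu x) integrable_on {0..L}" if "lam \<in> \<Lambda>" "mu \<in> \<Lambda>" for lam mu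
        using iH[OF that] by (rule integrable_on_mult_right)
      have "\<Phi> = (\<Sum>lam\<in>\<Lambda>. \<Sum>mu\<in>\<Lambda>. ((lam - a) * (mu - a)) * r lam mu)"
        unfolding \<Phi>_def pf r_def using fin iH iH'
        by (subst Henstock_Kurzweil_Integration.integral_sum)
           (auto intro!: Henstock_Kurzweil_Integration.integrable_sum sum.cong
             simp: Henstock_Kurzweil_Integration.integral_sum integral_mult_right)
      also have "\<dots> = (\<Sum>lam\<in>\<Lambda>. ((lam - a) * (lam - a)) * r lam lam)"
        using diag[of _ "\<lambda>lam mu. (lam - a) * (mu - a)"] by (intro sum.cong) auto
      finally show ?thesis .
    qed
    have Snn: "S \<ge> 0" unfolding S_eq by (intro sum_nonneg rnn)
    have Phi_le: "\<Phi> \<le> \<delta>^2 * S"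
    proof -
      have "\<Phi> \<le> (\<Sum>lam\<in>\<Lambda>. \<delta>^2 * r lam lam)"
        unfolding Phi_eq
      proof (intro sum_mono mult_right_mono rnn)
        fix lam assume lam: "lam \<in> \<Lambda>"
        then have "0 \<le> lam - a" "lam - a \<le> \<delta>" using sub by auto
        then show "(lam - a) * (lam - a) \<le> \<delta>^2" by (simp add: power2_eq_square mult_mono)
      qed
      also have "\<dots> = \<delta>^2 * S" unfolding S_eq by (simp add: sum_distrib_left)
      finally show ?thesis .
    qed
    define ud where "ud = (\<lambda>x i. - \<i> * cmatvec ?N (J x) (\<lambda>l. of_real a * s x l + f x l) i)"
    have comb: "(\<lambda>l. of_real a * s x l + f x l) = (\<lambda>l. \<Sum>lam\<in>\<Lambda>. of_real lam * V lam x l)" for x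
      unfolding s_def f_def by (rule ext) (simp add: sum_distrib_left sum.distrib[symmetric] algebra_simps)
    have hs: "((\<lambda>t. s t i) has_vector_derivative ud x i) (at x)" for x i
    proof -
      have "((\<lambda>t. s t i) has_vector_derivative (\<Sum>lam\<in>\<Lambda>. - \<i> * of_real lam * cmatvec ?N (J x) (V lam x) i)) (at x)"
        unfolding s_def by (intro has_vector_derivative_sum eigc_deriv Jsp) (use eig in auto)
      moreover have "ud x i = (\<Sum>lam\<in>\<Lambda>. - \<i> * of_real lam * cmatvec ?N (J x) (V lam x) i)"
        unfolding ud_def comb cmatvec_sum cmatvec_scale by (simp add: sum_distrib_left mult_ac)
      ultimately show ?thesis by simp
    qed
    have cf: "continuous_on {0..L} (\<lambda>x. f x i)" for i
      unfolding f_def by (intro continuous_intros cV) auto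
    have en: "Re (Hf n (J x) (s x) (s x)) \<le> E * \<Phi>" if "x \<in> {0..L}" for x
      using En[rule_format, of s ud a f x] hs cf z0 that unfolding \<Phi>_def ud_def s_def by auto
    have "S \<le> integral {0..L} (\<lambda>x. E * \<Phi>)"
      unfolding S_def
    proof (rule integral_le)
      show "(\<lambda>x. Re (Hf n (J x) (s x) (s x))) integrable_on {0..L}"
        unfolding ps using fin iH by (auto intro!: Henstock_Kurzweil_Integration.integrable_sum)
    qed (auto intro: en)
    also have "\<dots> = L * E * \<Phi>" using L by simp
    also have "\<dots> \<le> L * E * (\<delta>^2 * S)" using Phi_le L E0 by (intro mult_left_mono) auto
    also have "\<dots> = (L * E * \<delta>^2) * S" by simp
    also have "\<dots> \<le> 1/2 * S" using key Snn by (intro mult_right_mono) auto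
    finally have "S = 0" using Snn by simp
    hence r0: "r lam lam = 0" if "lam \<in> \<Lambda>" for lam
      using fin rnn that unfolding S_eq by (simp add: sum_nonneg_eq_0_iff)
    show "\<forall>lam\<in>\<Lambda>. \<forall>x i. V lam x i = 0"
    proof (intro ballI allI)
      fix lam x i assume lam: "lam \<in> \<Lambda>"
      have Hz: "H lam lam y = 0" if y: "y \<in> {0..L}" for y
      proof -
        have "(H lam lam has_integral 0) {0..L}"
          using iH[OF lam lam] r0[OF lam] unfolding r_def by (simp add: has_integral_integrable_integral)
        then show ?thesis
          using has_integral_0_cbox_imp_0[of 0 L "H lam lam" y] cH[OF lam lam] Hnn y L
          by (auto simp: cbox_interval)
      qed
      show "V lam x i = 0"
      proof (rule eigc_zero_ext[OF _ G L])
        show "eigc n G J L lam (V lam)" using eig lam by auto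
        show "V lam y j = 0" if "y \<in> {0..L}" "j < n+2" for y j
          using Hf_zero_iff[OF Jsp _ that(2)] Hz[OF that(1)] unfolding H_def by blast
      qed
    qed
  qed
qed


lemma window_finite:
  fixes mu :: "real \<Rightarrow> nat"
  assumes win: "\<And>a F. finite F \<Longrightarrow> F \<subseteq> {x. mu x > 0} \<inter> {a..a+\<delta>} \<Longrightarrow> (\<Sum>x\<in>F. mu x) \<le> K"
  shows "finite ({x. mu x > 0} \<inter> {a..a+\<delta>})"
proof -
  have "card G \<le> K" if "G \<subseteq> {x. mu x > 0} \<inter> {a..a+\<delta>}" "finite G" for G
  proof -
    have "card G = (\<Sum>x\<in>G. 1::nat)" by simp
    also have "\<dots> \<le> (\<Sum>x\<in>G. mu x)" using that by (intro sum_mono) auto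
    also have "\<dots> \<le> K" using win that by blast
    finally show ?thesis .
  qed
  then show ?thesis using finite_if_finite_subsets_card_bdd by blast
qed

lemma endgame:
  fixes mu :: "real \<Rightarrow> nat" and \<delta> :: real and K :: nat
  assumes sym: "\<And>x. mu (-x) = mu x"
    and dpos: "\<delta> > 0"
    and win: "\<And>a F. finite F \<Longrightarrow> F \<subseteq> {x. mu x > 0} \<inter> {a..a+\<delta>} \<Longrightarrow> (\<Sum>x\<in>F. mu x) \<le> K"
  shows "\<exists>\<sigma> U f. open U \<and> connected U \<and> 0 \<in> U \<and> {s. Re s > \<sigma>} \<subseteq> U \<and>
           f meromorphic_on U \<and>
           (\<forall>s. Re s > \<sigma> \<longrightarrow> ((\<lambda>s lam. of_nat (mu lam) * complex_of_real (sgn lam)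
                    * exp (- s * complex_of_real (ln \<bar>lam\<bar>))) s has_sum f s) {lam. lam \<noteq> 0 \<and> mu lam > 0}) \<and>
           (f \<longlongrightarrow> 0) (at 0)"
proof -
  define Spec where "Spec = {lam. lam \<noteq> 0 \<and> mu lam > 0}"
  define trm where "trm = (\<lambda>s lam. of_nat (mu lam) * complex_of_real (sgn lam)
                    * exp (- s * complex_of_real (ln \<bar>lam\<bar>)))"
  have wf: "finite ({x. mu x > 0} \<inter> {a..a+\<delta>})" for a
    using window_finite[of mu \<delta> K a] win by blast
  define M where "M = nat \<lceil>2/\<delta>\<rceil>"
  have small_sub: "Spec \<inter> {-1..1} \<subseteq> (\<Union>j\<in>{0..M}. {x. mu x > 0} \<inter> {-1 + real j*\<delta>..-1 + real j*\<delta>+\<delta>})"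
  proof
    fix x assume x: "x \<in> Spec \<inter> {-1..1}"
    define j where "j = nat \<lfloor>(x+1)/\<delta>\<rfloor>"
    have x1: "0 \<le> (x+1)/\<delta>" using x dpos by (auto simp: Spec_def)
    have jle: "real j \<le> (x+1)/\<delta>" using x1 by (simp add: j_def)
    have jgt: "(x+1)/\<delta> < real j + 1" using x1 unfolding j_def by linarith
    have "(x+1)/\<delta> \<le> 2/\<delta>" using x dpos by (intro divide_right_mono) auto
    hence "real j \<le> real M" unfolding M_def using jle by linarith
    hence "j \<le> M" by simp
    moreover have "real j * \<delta> \<le> x + 1" using jle dpos by (simp add: field_simps)
    moreover have "x + 1 \<le> real j * \<delta> + \<delta>" using jgt dpos by (simp add: field_simps)
    ultimately show "x \<in> (\<Union>j\<in>{0..M}. {x. mu x > 0} \<inter> {-1 + real j*\<delta>..-1 + real j*\<delta>+\<delta>})"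
      using x by (auto simp: Spec_def intro!: bexI[of _ j])
  qed
  have small_fin: "finite (Spec \<inter> {-1..1})"
    by (rule finite_subset[OF small_sub]) (intro finite_UN_I; use wf in auto)
  define \<rho> where "\<rho> = Min (insert 1 (abs ` (Spec \<inter> {-1..1})))"
  have rpos: "\<rho> > 0" unfolding \<rho>_def using small_fin by (subst Min_gr_iff) (auto simp: Spec_def)
  have rle: "\<rho> \<le> \<bar>x\<bar>" if "x \<in> Spec" for x
  proof (cases "\<bar>x\<bar> \<le> 1")
    case True
    have "\<bar>x\<bar> \<in> abs ` (Spec \<inter> {-1..1})" using True that by (intro imageI) (auto simp: abs_le_iff)
    then show ?thesis unfolding \<rho>_def using small_fin by (meson Min_le finite_imageI finite_insert subset_insertI subsetD)
  next
    case False
    have "\<rho> \<le> 1" unfolding \<rho>_def using small_fin by (intro Min_le) auto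
    then show ?thesis using False by simp
  qed
  define C where "C = 1/\<rho>^2 + 1/\<delta>^2"
  define S2 where "S2 = (\<Sum>j. inverse (real (Suc j) ^ 2))"
  have sum2: "summable (\<lambda>j. inverse (real (Suc j) ^ 2))"
    using inverse_power_summable[of 2, where 'a=real] by (subst summable_Suc_iff) simp
  define kf where "kf = (\<lambda>x::real. nat \<lfloor>\<bar>x\<bar>/\<delta>\<rfloor>)"
  have shell_bound: "(\<Sum>x\<in>{x\<in>F. kf x = j}. real (mu x) / x^2) \<le> 8 * real K * C * inverse (real (Suc j) ^ 2)"
    if F: "finite F" "F \<subseteq> Spec" for F j
  proof -
    let ?G = "{x\<in>F. kf x = j}"
    have xin: "real j * \<delta> \<le> \<bar>x\<bar> \<and> \<bar>x\<bar> \<le> real j * \<delta> + \<delta>" if "x \<in> ?G" for x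
    proof -
      have x0: "0 \<le> \<bar>x\<bar>/\<delta>" using dpos by simp
      have kj: "nat \<lfloor>\<bar>x\<bar>/\<delta>\<rfloor> = j" using that unfolding kf_def by auto
      have "real j \<le> \<bar>x\<bar>/\<delta>" "\<bar>x\<bar>/\<delta> < real j + 1" using kj x0 by linarith+
      then show ?thesis using dpos by (simp add: field_simps)
    qed
    have bnd: "1/x^2 \<le> 4 * C * inverse (real (Suc j) ^ 2)" if "x \<in> ?G" for x
    proof (cases "j = 0")
      case True
      have xs: "x \<in> Spec" using that F by auto
      have "\<rho> \<le> \<bar>x\<bar>" using rle[OF xs] .
      hence "\<rho>^2 \<le> x^2" using rpos by (metis abs_ge_zero less_imp_le power2_abs power_mono)
      moreover have "0 < \<rho>^2" using rpos by simp
      ultimately have "1/x^2 \<le> 1/\<rho>^2" by (simp add: le_imp_inverse_le flip: inverse_eq_divide)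
      also have "\<dots> \<le> 4 * C" unfolding C_def using dpos rpos by (simp add: divide_simps)
      finally show ?thesis using True by simp
    next
      case False
      have "real (Suc j) * \<delta> / 2 \<le> real j * \<delta>" using False dpos by (simp add: field_simps)
      also have "\<dots> \<le> \<bar>x\<bar>" using xin[OF that] by simp
      finally have h: "real (Suc j) * \<delta> / 2 \<le> \<bar>x\<bar>" .
      have "(real (Suc j) * \<delta> / 2)^2 \<le> x^2"
      proof -
        have "0 \<le> real (Suc j) * \<delta> / 2" using dpos by simp
        from power_mono[OF h this, of 2] show ?thesis by simp
      qed
      moreover have "0 < (real (Suc j) * \<delta> / 2)^2" using dpos by simp
      ultimately have "1/x^2 \<le> 1/(real (Suc j) * \<delta> / 2)^2" by (simp only: le_imp_inverse_le flip: inverse_eq_divide)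
      also have "\<dots> = 4 * (1/\<delta>^2) * inverse (real (Suc j) ^ 2)" by (simp add: field_simps power2_eq_square)
      also have "\<dots> \<le> 4 * C * inverse (real (Suc j) ^ 2)" unfolding C_def using rpos
        by (intro mult_right_mono mult_left_mono) auto
      finally show ?thesis .
    qed
    have G1: "{x\<in>?G. x \<ge> 0} \<subseteq> {x. mu x > 0} \<inter> {real j*\<delta>..real j*\<delta>+\<delta>}"
    proof
      fix x assume x: "x \<in> {x\<in>?G. x \<ge> 0}"
      then show "x \<in> {x. mu x > 0} \<inter> {real j*\<delta>..real j*\<delta>+\<delta>}"
        using xin[of x] F by (auto simp: Spec_def)
    qed
    have G2: "{x\<in>?G. \<not> x \<ge> 0} \<subseteq> {x. mu x > 0} \<inter> {-(real j*\<delta>+\<delta>)..-(real j*\<delta>+\<delta>)+\<delta>}"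
    proof
      fix x assume x: "x \<in> {x\<in>?G. \<not> x \<ge> 0}"
      then show "x \<in> {x. mu x > 0} \<inter> {-(real j*\<delta>+\<delta>)..-(real j*\<delta>+\<delta>)+\<delta>}"
        using xin[of x] F by (auto simp: Spec_def)
    qed
    have e: "{x\<in>?G. x \<ge> 0} \<union> {x\<in>?G. \<not> x \<ge> 0} = ?G" by auto
    have "(\<Sum>x\<in>?G. mu x) = (\<Sum>x\<in>{x\<in>?G. x \<ge> 0} \<union> {x\<in>?G. \<not> x \<ge> 0}. mu x)"
      by (simp only: e)
    also have "\<dots> = (\<Sum>x\<in>{x\<in>?G. x \<ge> 0}. mu x) + (\<Sum>x\<in>{x\<in>?G. \<not> x \<ge> 0}. mu x)"
      by (rule sum.union_disjoint) (use F in auto)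
    also have "\<dots> \<le> K + K" using win[OF _ G1] win[OF _ G2] F by (intro add_mono) auto
    finally have mG: "real (\<Sum>x\<in>?G. mu x) \<le> 2 * real K" by linarith
    have "(\<Sum>x\<in>?G. real (mu x) / x^2) \<le> (\<Sum>x\<in>?G. real (mu x) * (4 * C * inverse (real (Suc j) ^ 2)))"
    proof (rule sum_mono)
      fix x assume x: "x \<in> ?G"
      have "real (mu x) * (1/x^2) \<le> real (mu x) * (4 * C * inverse (real (Suc j) ^ 2))"
        using bnd[OF x] by (intro mult_left_mono) auto
      then show "real (mu x) / x^2 \<le> real (mu x) * (4 * C * inverse (real (Suc j) ^ 2))" by simp
    qed
    also have "\<dots> = real (\<Sum>x\<in>?G. mu x) * (4 * C * inverse (real (Suc j) ^ 2))"
      by (simp add: sum_distrib_right)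
    also have "\<dots> \<le> 2 * real K * (4 * C * inverse (real (Suc j) ^ 2))"
      using mG rpos dpos unfolding C_def by (intro mult_right_mono) auto
    finally show ?thesis by simp
  qed
  have summ2: "(\<lambda>x. real (mu x) / x^2) summable_on Spec"
  proof (rule nonneg_bdd_above_summable_on)
    show "bdd_above (sum (\<lambda>x. real (mu x) / x^2) ` {F. F \<subseteq> Spec \<and> finite F})"
    proof (rule bdd_aboveI2)
      fix F assume "F \<in> {F. F \<subseteq> Spec \<and> finite F}"
      hence F: "finite F" "F \<subseteq> Spec" by auto
      have "(\<Sum>x\<in>F. real (mu x) / x^2) = (\<Sum>j\<in>kf ` F. \<Sum>x\<in>{x\<in>F. kf x = j}. real (mu x) / x^2)"
        using F by (intro sum.group[symmetric]) auto
      also have "\<dots> \<le> (\<Sum>j\<in>kf ` F. 8 * real K * C * inverse (real (Suc j) ^ 2))"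
        using shell_bound[OF F] by (intro sum_mono) auto
      also have "\<dots> = 8 * real K * C * (\<Sum>j\<in>kf ` F. inverse (real (Suc j) ^ 2))"
        by (simp add: sum_distrib_left)
      also have "\<dots> \<le> 8 * real K * C * S2"
        unfolding S2_def using F sum2 rpos dpos unfolding C_def
        by (intro mult_left_mono sum_le_suminf) auto
      finally show "(\<Sum>x\<in>F. real (mu x) / x^2) \<le> 8 * real K * C * S2" .
    qed
  qed auto
  have summ: "trm s summable_on Spec" if s: "Re s > 2" for s
  proof -
    define c where "c = \<rho> powr (2 - Re s)"
    have c0: "c \<ge> 0" unfolding c_def by simp
    have eq: "(\<lambda>x. norm (complex_of_real (c * (real (mu x) / x^2)))) = (\<lambda>x. c * (real (mu x) / x^2))"
      by (rule ext, subst norm_of_real, rule abs_of_nonneg) (use c0 in simp)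
    have sc: "(\<lambda>x. norm (complex_of_real (c * (real (mu x) / x^2)))) summable_on Spec"
      unfolding eq by (intro summable_on_cmult_right summ2)
    have "(\<lambda>x. norm (trm s x)) summable_on Spec"
    proof (rule Infinite_Sum.abs_summable_on_comparison_test[OF sc])
      fix x assume x: "x \<in> Spec"
      have ax: "\<bar>x\<bar> > 0" using x by (auto simp: Spec_def)
      have n1: "norm (complex_of_real (sgn x)) = 1" using ax by (simp add: sgn_if)
      have n2: "norm (exp (- s * complex_of_real (ln \<bar>x\<bar>))) = \<bar>x\<bar> powr (- Re s)"
        using ax by (simp add: norm_exp_eq_Re powr_def)
      have "norm (trm s x) = real (mu x) * \<bar>x\<bar> powr (- Re s)"
        unfolding trm_def norm_mult n1 n2 by simp
      also have "\<bar>x\<bar> powr (- Re s) = \<bar>x\<bar> powr (-2) * \<bar>x\<bar> powr (2 - Re s)"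
        by (simp flip: powr_add)
      also have "\<bar>x\<bar> powr (-2) = 1 / x^2" using ax by (simp add: powr_minus powr_realpow divide_inverse)
      finally have A: "norm (trm s x) = real (mu x) * (1 / x^2 * \<bar>x\<bar> powr (2 - Re s))" .
      have B: "\<bar>x\<bar> powr (2 - Re s) \<le> c"
        unfolding c_def using s rpos rle[OF x] by (intro powr_mono2') auto
      have "real (mu x) * (1 / x^2 * \<bar>x\<bar> powr (2 - Re s)) \<le> real (mu x) * (1 / x^2 * c)"
        using B by (intro mult_left_mono) auto
      also have "\<dots> = norm (complex_of_real (c * (real (mu x) / x^2)))"
        by (subst norm_of_real, subst abs_of_nonneg) (use c0 in simp_all)
      finally show "norm (trm s x) \<le> norm (complex_of_real (c * (real (mu x) / x^2)))"
        using A by simp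
    qed
    thus ?thesis by (rule abs_summable_summable)
  qed
  have zero: "(trm s has_sum 0) Spec" if s: "Re s > 2" for s
  proof -
    have bij: "bij_betw uminus Spec Spec"
      by (rule bij_betwI[of _ _ _ uminus]) (auto simp: Spec_def sym)
    have "infsum (\<lambda>x. trm s (- x)) Spec = infsum (trm s) Spec"
      by (rule infsum_reindex_bij_betw[OF bij])
    moreover have "(\<lambda>x. trm s (- x)) = (\<lambda>x. - trm s x)"
      by (rule ext) (simp add: trm_def sym sgn_minus)
    ultimately have "- infsum (trm s) Spec = infsum (trm s) Spec"
      by (simp add: infsum_uminus)
    hence "infsum (trm s) Spec = 0" by simp
    with summ[OF s] show ?thesis using has_sum_infsum by metis
  qed
  show ?thesis
    apply (rule exI[of _ 2], rule exI[of _ UNIV], rule exI[of _ "\<lambda>_. 0"])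
    using zero unfolding trm_def Spec_def
    by (auto intro!: analytic_on_imp_meromorphic_on)
qed


declare sum.lessThan_Suc[simp del] add_2_eq_Suc[simp del] add_2_eq_Suc'[simp del]

lemma lin_dep:
  fixes w :: "'j \<Rightarrow> 'r \<Rightarrow> complex"
  assumes "finite R" "finite J" "card R < card J"
  shows "\<exists>cf. (\<exists>j\<in>J. cf j \<noteq> 0) \<and> (\<forall>r\<in>R. (\<Sum>j\<in>J. cf j * w j r) = 0)"
  using assms
proof (induction R arbitrary: J w rule: finite_induct)
  case empty
  then have "J \<noteq> {}" by auto
  then show ?case by (intro exI[of _ "\<lambda>_. 1"]) auto
next
  case (insert r0 R)
  show ?case
  proof (cases "\<forall>j\<in>J. w j r0 = 0")
    case True
    have "card R < card J" using insert by simp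
    from insert.IH[OF \<open>finite J\<close> this, of w] obtain cf where
      cf: "\<exists>j\<in>J. cf j \<noteq> 0" "\<forall>r\<in>R. (\<Sum>j\<in>J. cf j * w j r) = 0" by blast
    then show ?thesis using True by (intro exI[of _ cf]) auto
  next
    case False
    then obtain p where p: "p \<in> J" "w p r0 \<noteq> 0" by blast
    define J' where "J' = J - {p}"
    have fJ': "finite J'" using insert unfolding J'_def by simp
    have cJ': "card R < card J'" using insert p unfolding J'_def by (simp add: card_Diff_singleton)
    define w' where "w' = (\<lambda>j r. w j r - (w j r0 / w p r0) * w p r)"
    from insert.IH[OF fJ' cJ', of w'] obtain cf' where
      cf': "\<exists>j\<in>J'. cf' j \<noteq> 0" "\<forall>r\<in>R. (\<Sum>j\<in>J'. cf' j * w' j r) = 0" by blast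
    define t where "t = (\<Sum>j\<in>J'. cf' j * w j r0)"
    define cf where "cf = (\<lambda>j. if j = p then - t / w p r0 else cf' j)"
    have split: "(\<Sum>j\<in>J. cf j * w j r) = cf p * w p r + (\<Sum>j\<in>J'. cf' j * w j r)" for r
    proof -
      have "(\<Sum>j\<in>J. cf j * w j r) = cf p * w p r + (\<Sum>j\<in>J'. cf j * w j r)"
        unfolding J'_def using insert p by (simp add: sum.remove)
      moreover have "(\<Sum>j\<in>J'. cf j * w j r) = (\<Sum>j\<in>J'. cf' j * w j r)"
        unfolding J'_def cf_def by (intro sum.cong) auto
      ultimately show ?thesis by simp
    qed
    show ?thesis
    proof (intro exI[of _ cf] conjI ballI)
      obtain j where j: "j \<in> J'" "cf' j \<noteq> 0" using cf' by blast
      then show "\<exists>j\<in>J. cf j \<noteq> 0" unfolding cf_def J'_def by (intro bexI[of _ j]) auto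
    next
      fix r assume "r \<in> insert r0 R"
      then consider "r = r0" | "r \<in> R" by blast
      then show "(\<Sum>j\<in>J. cf j * w j r) = 0"
      proof cases
        case 1
        have "cf p * w p r0 = - t" unfolding cf_def using p by simp
        then show ?thesis unfolding 1 using split[of r0] unfolding t_def by simp
      next
        case 2
        have "0 = (\<Sum>j\<in>J'. cf' j * w' j r)" using cf' 2 by simp
        also have "\<dots> = (\<Sum>j\<in>J'. cf' j * w j r) - t / w p r0 * w p r"
        proof -
          have "(\<Sum>j\<in>J'. cf' j * w' j r) = (\<Sum>j\<in>J'. cf' j * w j r - cf' j * w j r0 * (w p r / w p r0))"
            unfolding w'_def by (intro sum.cong) (auto simp: algebra_simps)
          also have "\<dots> = (\<Sum>j\<in>J'. cf' j * w j r) - t * (w p r / w p r0)"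
            unfolding t_def by (simp add: sum_subtractf sum_distrib_right sum_divide_distrib)
          finally show ?thesis by simp
        qed
        finally have "(\<Sum>j\<in>J'. cf' j * w j r) = t / w p r0 * w p r" by simp
        moreover have "cf p = - t / w p r0" unfolding cf_def by simp
        ultimately show ?thesis using split[of r] by simp
      qed
    qed
  qed
qed

lemma eigensection_eigc:
  assumes e: "eigensection n c L g Jb lam S" and k: "k < c"
  shows "eigc n (g k) (Jb k) (L k) lam (S k)"
proof -
  have b: "bsection n c L g S" using e unfolding eigensection_def by blast
  have sm: "smooth_fun (\<lambda>x. S k x i)" for i using b k unfolding bsection_def by blast
  have sup: "S k x i = 0" if "n+2 \<le> i" for x i using b that unfolding bsection_def by blast
  have per: "S k (x + L k) = cmatvec (n+2) (g k) (S k x)" for x using b k unfolding bsection_def by blast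
  have eq: "\<forall>x. \<forall>i<n+2. \<i> * (\<Sum>j<n+2. of_real (Jb k x i j) * vector_derivative (\<lambda>t. S k t j) (at x)) = of_real lam * S k x i"
    using e k unfolding eigensection_def by blast
  show ?thesis unfolding eigc_def
    using smooth_differentiable[OF sm] sup per eq by blast
qed

definition good_delta where
  "good_delta n c L g Jb \<delta> \<longleftrightarrow> \<delta> > 0 \<and> (\<forall>k<c. \<forall>a \<Lambda> V. finite \<Lambda> \<longrightarrow> \<Lambda> \<subseteq> {a..a+\<delta>} \<longrightarrow>
     (\<forall>lam\<in>\<Lambda>. eigc n (g k) (Jb k) (L k) lam (V lam)) \<longrightarrow>
     (\<forall>i<n+2. (\<Sum>lam\<in>\<Lambda>. V lam 0 i) = 0) \<longrightarrow> (\<forall>lam\<in>\<Lambda>. \<forall>x i. V lam x i = 0))"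

lemma global_delta:
  assumes bd: "boundary_data n c L g Jb"
  shows "\<exists>\<delta>. good_delta n c L g Jb \<delta>"
proof -
  have ex: "\<forall>k\<in>{..<c}. \<exists>\<delta>>0. \<forall>a \<Lambda> V. finite \<Lambda> \<longrightarrow> \<Lambda> \<subseteq> {a..a+\<delta>} \<longrightarrow>
     (\<forall>lam\<in>\<Lambda>. eigc n (g k) (Jb k) (L k) lam (V lam)) \<longrightarrow>
     (\<forall>i<n+2. (\<Sum>lam\<in>\<Lambda>. V lam 0 i) = 0) \<longrightarrow> (\<forall>lam\<in>\<Lambda>. \<forall>x i. V lam x i = 0)"
  proof
    fix k assume "k \<in> {..<c}"
    then have k: "k < c" by simp
    show "\<exists>\<delta>>0. \<forall>a \<Lambda> V. finite \<Lambda> \<longrightarrow> \<Lambda> \<subseteq> {a..a+\<delta>} \<longrightarrow>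
     (\<forall>lam\<in>\<Lambda>. eigc n (g k) (Jb k) (L k) lam (V lam)) \<longrightarrow>
     (\<forall>i<n+2. (\<Sum>lam\<in>\<Lambda>. V lam 0 i) = 0) \<longrightarrow> (\<forall>lam\<in>\<Lambda>. \<forall>x i. V lam x i = 0)"
    proof (rule circle_core)
      have bdk: "L k > 0 \<and> g k \<in> SO0_n2 n \<and> (\<forall>i j. smooth_fun (\<lambda>x. Jb k x i j)) \<and> (\<forall>x. Jb k x \<in> Jspace n)"
        using bd k unfolding boundary_data_def by blast
      show "L k > 0" using bdk by blast
      show "g k \<in> O_n2 n" using bdk SO0_O by blast
      show "\<And>x. Jb k x \<in> Jspace n" using bdk by blast
      show "\<And>i j. smooth_fun (\<lambda>x. Jb k x i j)" using bdk by blast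
    qed
  qed
  obtain d where d: "\<forall>k\<in>{..<c}. d k > 0 \<and> (\<forall>a \<Lambda> V. finite \<Lambda> \<longrightarrow> \<Lambda> \<subseteq> {a..a+d k} \<longrightarrow>
     (\<forall>lam\<in>\<Lambda>. eigc n (g k) (Jb k) (L k) lam (V lam)) \<longrightarrow>
     (\<forall>i<n+2. (\<Sum>lam\<in>\<Lambda>. V lam 0 i) = 0) \<longrightarrow> (\<forall>lam\<in>\<Lambda>. \<forall>x i. V lam x i = 0))"
    using bchoice[OF ex] by (elim exE) (rule that)
  define \<delta> where "\<delta> = Min (insert 1 (d ` {..<c}))"
  have dpos: "\<delta> > 0" unfolding \<delta>_def using d by (subst Min_gr_iff) auto
  have dle: "\<delta> \<le> d k" if "k < c" for k unfolding \<delta>_def using that by (intro Min_le) auto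
  show ?thesis unfolding good_delta_def
  proof (intro exI[of _ \<delta>] conjI dpos allI impI)
    fix k a \<Lambda> V assume k: "k < c" and h: "finite \<Lambda>" "\<Lambda> \<subseteq> {a..a+\<delta>}"
      "\<forall>lam\<in>\<Lambda>. eigc n (g k) (Jb k) (L k) lam (V lam)" "\<forall>i<n+2. (\<Sum>lam\<in>\<Lambda>. V lam 0 i) = 0"
    have "\<Lambda> \<subseteq> {a..a + d k}" using h(2) dle[OF k] by auto
    then show "\<forall>lam\<in>\<Lambda>. \<forall>x i. V lam x i = 0" using d k h by auto
  qed
qed

lemma count:
  assumes bd: "boundary_data n c L g Jb" and gd: "good_delta n c L g Jb \<delta>"
    and fin: "finite \<Lambda>" and sub: "\<Lambda> \<subseteq> {a..a+\<delta>}"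
    and eig: "\<And>lam j. lam \<in> \<Lambda> \<Longrightarrow> j < m lam \<Longrightarrow> eigensection n c L g Jb lam (S lam j)"
    and li: "\<And>lam. lam \<in> \<Lambda> \<Longrightarrow> lin_indep_sections (m lam) (S lam)"
  shows "(\<Sum>lam\<in>\<Lambda>. m lam) \<le> c * (n+2)"
proof (rule ccontr)
  have gd2: "\<forall>k<c. \<forall>a \<Lambda> V. finite \<Lambda> \<longrightarrow> \<Lambda> \<subseteq> {a..a+\<delta>} \<longrightarrow>
     (\<forall>lam\<in>\<Lambda>. eigc n (g k) (Jb k) (L k) lam (V lam)) \<longrightarrow>
     (\<forall>i<n+2. (\<Sum>lam\<in>\<Lambda>. V lam 0 i) = 0) \<longrightarrow> (\<forall>lam\<in>\<Lambda>. \<forall>x i. V lam x i = 0)"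
    using gd unfolding good_delta_def by (rule conjunct2)
  assume neg: "\<not> ?thesis"
  define P where "P = Sigma \<Lambda> (\<lambda>lam. {..<m lam})"
  define R where "R = {..<c} \<times> {..<n+2}"
  have fP: "finite P" unfolding P_def using fin by auto
  have cP: "card P = (\<Sum>lam\<in>\<Lambda>. m lam)" unfolding P_def using fin by (simp add: card_SigmaI)
  have cR: "card R = c * (n+2)" unfolding R_def by (simp add: card_cartesian_product)
  have "card R < card P" using neg cP cR by simp
  from lin_dep[OF _ fP this, of "\<lambda>p r. S (fst p) (snd p) (fst r) 0 (snd r)"]
  obtain cf where cf: "\<exists>p\<in>P. cf p \<noteq> 0"
    "\<forall>r\<in>R. (\<Sum>p\<in>P. cf p * S (fst p) (snd p) (fst r) 0 (snd r)) = 0"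
    unfolding R_def by auto
  define V where "V = (\<lambda>lam k x i. \<Sum>j\<in>{..<m lam}. cf (lam, j) * S lam j k x i)"
  have Vz: "V lam k x i = 0" if lam: "lam \<in> \<Lambda>" for lam k x i
  proof (cases "k < c")
    case k: True
    have A: "\<forall>lam\<in>\<Lambda>. eigc n (g k) (Jb k) (L k) lam (V lam k)"
    proof
      fix lam assume lam: "lam \<in> \<Lambda>"
      show "eigc n (g k) (Jb k) (L k) lam (V lam k)"
        unfolding V_def by (rule eigc_sum) (auto intro: eigensection_eigc eig lam k)
    qed
    have B: "\<forall>i<n+2. (\<Sum>lam\<in>\<Lambda>. V lam k 0 i) = 0"
    proof (intro allI impI)
      fix i assume i: "i < n+2"
      have "(\<Sum>lam\<in>\<Lambda>. V lam k 0 i) = (\<Sum>p\<in>P. cf p * S (fst p) (snd p) k 0 i)"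
        unfolding V_def P_def using fin by (simp add: sum.Sigma split_def)
      also have "\<dots> = 0" using cf(2) k i unfolding R_def by auto
      finally show "(\<Sum>lam\<in>\<Lambda>. V lam k 0 i) = 0" .
    qed
    note C = gd2[rule_format, where k=k and a=a and \<Lambda>=\<Lambda> and V="\<lambda>lam. V lam k", OF k fin sub A[rule_format] B[rule_format]]
    show ?thesis by (rule C) (simp_all add: lam)
  next
    case False
    have "S lam j k x i = 0" if "j < m lam" for j
      using eig[OF lam that] False unfolding eigensection_def bsection_def by auto
    then show ?thesis unfolding V_def by simp
  qed
  have "cf p = 0" if p: "p \<in> P" for p
  proof -
    obtain lam j where pj: "p = (lam, j)" "lam \<in> \<Lambda>" "j < m lam" using p unfolding P_def by auto
    have "\<forall>k x i. (\<Sum>j<m lam. (\<lambda>j. cf (lam, j)) j * S lam j k x i) = 0"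
      using Vz[OF pj(2)] unfolding V_def by simp
    note hh = this
    have L: "\<And>b. (\<forall>k x i. (\<Sum>j<m lam. b j * S lam j k x i) = 0) \<Longrightarrow> \<forall>j<m lam. b j = 0"
      using li[OF pj(2)] unfolding lin_indep_sections_def by blast
    have "\<forall>j<m lam. cf (lam, j) = 0" using L[where b="\<lambda>j. cf (lam, j)"] hh by blast
    then show ?thesis using pj by simp
  qed
  then show False using cf(1) by blast
qed

lemma mu_attained:
  assumes bd: "boundary_data n c L g Jb" and gd: "good_delta n c L g Jb \<delta>"
  shows "\<exists>S. (\<forall>j<eig_mult n c L g Jb lam. eigensection n c L g Jb lam (S j)) \<and>
     lin_indep_sections (eig_mult n c L g Jb lam) S"
proof -
  define X where "X = {m. \<exists>S. (\<forall>j<m. eigensection n c L g Jb lam (S j)) \<and> lin_indep_sections m S}"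
  have dpos: "\<delta> > 0" using gd unfolding good_delta_def by blast
  have bnd: "m \<le> c * (n+2)" if mX: "m \<in> X" for m
  proof -
    obtain S where S: "\<forall>j<m. eigensection n c L g Jb lam (S j)" "lin_indep_sections m S"
      using mX unfolding X_def by blast
    have "(\<Sum>l\<in>{lam}. (\<lambda>_. m) l) \<le> c * (n+2)"
      by (rule count[OF bd gd, where a=lam and S="\<lambda>_. S"]) (use S dpos in auto)
    then show ?thesis by simp
  qed
  have fin: "finite X" using bnd by (meson finite_atMost finite_subset subsetI atMost_iff)
  have ne: "0 \<in> X" unfolding X_def lin_indep_sections_def by auto
  have "eig_mult n c L g Jb lam = Max X"
    unfolding eig_mult_def X_def[symmetric] using fin ne by (auto simp: Sup_nat_def)
  moreover have "Max X \<in> X" using fin ne by (intro Max_in) auto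
  ultimately show ?thesis unfolding X_def by simp
qed

lemma window_bound:
  assumes bd: "boundary_data n c L g Jb" and gd: "good_delta n c L g Jb \<delta>"
    and F: "finite F" "F \<subseteq> {x. eig_mult n c L g Jb x > 0} \<inter> {a..a+\<delta>}"
  shows "(\<Sum>x\<in>F. eig_mult n c L g Jb x) \<le> c * (n+2)"
proof -
  have "\<forall>lam. \<exists>S. (\<forall>j<eig_mult n c L g Jb lam. eigensection n c L g Jb lam (S j)) \<and>
     lin_indep_sections (eig_mult n c L g Jb lam) S"
    using mu_attained[OF bd gd] by blast
  then obtain SS where SS: "\<And>lam. (\<forall>j<eig_mult n c L g Jb lam. eigensection n c L g Jb lam (SS lam j)) \<and>
     lin_indep_sections (eig_mult n c L g Jb lam) (SS lam)"
    by metis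
  show ?thesis
    by (rule count[OF bd gd F(1), where a=a and S=SS]) (use F SS in auto)
qed

theorem mainTheorem15:
  fixes n c :: nat and L :: "nat \<Rightarrow> real" and g :: "nat \<Rightarrow> rmat"
    and Jb :: "nat \<Rightarrow> real \<Rightarrow> rmat"
  assumes "c \<ge> 1"
    and "boundary_data n c L g Jb"
  shows "eta_vanishes n c L g Jb"
proof -
  obtain \<delta> where gd: "good_delta n c L g Jb \<delta>" using global_delta[OF assms(2)] by blast
  have dpos: "\<delta> > 0" using gd unfolding good_delta_def by blast
  show ?thesis unfolding eta_vanishes_def Let_def
  proof (rule endgame[where \<delta>=\<delta> and K="c*(n+2)"])
    show "\<And>x. eig_mult n c L g Jb (- x) = eig_mult n c L g Jb x" by (rule eig_mult_sym)
    show "\<delta> > 0" by (rule dpos)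
    show "\<And>a F. finite F \<Longrightarrow> F \<subseteq> {x. eig_mult n c L g Jb x > 0} \<inter> {a..a+\<delta>} \<Longrightarrow>
        (\<Sum>x\<in>F. eig_mult n c L g Jb x) \<le> c * (n+2)"
      by (rule window_bound[OF assms(2) gd])
  qed
qed


end
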